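(* Let $v$ satisfy the standing assumptions and the doubling condition with constant $D$, and let $u\in h^\infty_v$ with $|u(z)|\le Kv(|z|)$ be of the form $u(re^{i\phi})=\sum_{j\ge0}\alpha_j r^{n_j}\cos(n_j\phi)$, $\alpha_j\in\mathbb{R}$, where the $n_j$ are positive integers with $\lambda n_j<n_{j+1}\le 4n_j$ for all $j$, for some $\lambda\in(1,2]$. Put $c_j=\int_{1/2}^1\frac{r^{n_j}dv(r)}{v(r)^2}$, $S_N(\phi)=\sum_{j=0}^N\alpha_jc_j\cos(n_j\phi)$, $r_N=1-1/n_N$, and $$I_u(R,\phi)=\int_{1/2}^R\frac{u(re^{i\phi})\,dv(r)}{v(r)^2}.$$ Then there is a constant $C$ (independent of $N$, $R$, $\phi$) such that $|I_u(R,\phi)-S_N(\phi)|\le C$ for all $N$ with $n_N\ge2$, all $R\in[r_N,r_{N+1})$ and all $\phi\in(-\pi,\pi]$. Moreover $\sum_{j=0}^N(\alpha_jc_j)^2\le C\log g(n_N)$ for all $N$ with $n_N$ sufficiently large, where $g(x)=v(1-x^{-1})$.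
   Context: Standing assumptions: $v:[0,1)\to[1,\infty)$ is positive, increasing, continuous, $v(0)=1$, $\lim_{r\to1}v(r)=+\infty$. Doubling condition: $v(1-d)\le D\,v(1-2d)$ for all $d\in(0,1/2]$. $h^\infty_v$ is the set of real harmonic $u$ on $\mathbb{D}$ with $|u(z)|\le Kv(|z|)$ for some $K>0$. Integrals with respect to $dv$ are Riemann–Stieltjes integrals. *)

theory Defs
  imports "HOL-Analysis.Analysis"
begin

definition RS_sum :: "(real \<Rightarrow> real) \<Rightarrow> (real \<Rightarrow> real) \<Rightarrow> (nat \<Rightarrow> real) \<Rightarrow> (nat \<Rightarrow> real) \<Rightarrow> nat \<Rightarrow> real" where
  "RS_sum f g x t n = (\<Sum>i<n. f (t i) * (g (x (Suc i)) - g (x i)))"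

definition tagged_partition :: "real \<Rightarrow> real \<Rightarrow> (nat \<Rightarrow> real) \<Rightarrow> (nat \<Rightarrow> real) \<Rightarrow> nat \<Rightarrow> bool" where
  "tagged_partition a b x t n \<longleftrightarrow> x 0 = a \<and> x n = b \<and>
     (\<forall>i<n. x i < x (Suc i) \<and> x i \<le> t i \<and> t i \<le> x (Suc i))"

definition has_RS_integral :: "(real \<Rightarrow> real) \<Rightarrow> (real \<Rightarrow> real) \<Rightarrow> real \<Rightarrow> real \<Rightarrow> real \<Rightarrow> bool" where
  "has_RS_integral f g a b I \<longleftrightarrow>
     (\<forall>e>0. \<exists>d>0. \<forall>x t n. tagged_partition a b x t n \<and> (\<forall>i<n. x (Suc i) - x i < d)
        \<longrightarrow> \<bar>RS_sum f g x t n - I\<bar> < e)"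

definition RS_integral :: "(real \<Rightarrow> real) \<Rightarrow> (real \<Rightarrow> real) \<Rightarrow> real \<Rightarrow> real \<Rightarrow> real" where
  "RS_integral f g a b = (THE I. has_RS_integral f g a b I)"

definition RS_integral_to_1 :: "(real \<Rightarrow> real) \<Rightarrow> (real \<Rightarrow> real) \<Rightarrow> real \<Rightarrow> real" where
  "RS_integral_to_1 f g a = Lim (at_left 1) (\<lambda>R. RS_integral f g a R)"

definition weight :: "(real \<Rightarrow> real) \<Rightarrow> bool" where
  "weight v \<longleftrightarrow> (\<forall>r\<in>{0..<1}. v r \<ge> 1) \<and> strict_mono_on {0..<1} v \<and>
     continuous_on {0..<1} v \<and> v 0 = 1 \<and> filterlim v at_top (at_left 1)"

definition doubling :: "(real \<Rightarrow> real) \<Rightarrow> real \<Rightarrow> bool" where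
  "doubling v D \<longleftrightarrow> (\<forall>d\<in>{0<..1/2}. v (1 - d) \<le> D * v (1 - 2 * d))"

end

theory Submission
  imports Defs
begin


lemma partition_exists:
  fixes a b d :: real
  assumes "a \<le> b" "d > 0"
  shows "\<exists>x t n. tagged_partition a b x t n \<and> (\<forall>i<n. x (Suc i) - x i < d)"
proof (cases "a = b")
  case True
  then show ?thesis
    by (rule_tac x="\<lambda>_. a" in exI, rule_tac x="\<lambda>_. a" in exI, rule_tac x=0 in exI)
       (simp add: tagged_partition_def)
next
  case False
  then have ab: "a < b" using assms by simp
  obtain n :: nat where n: "(b - a) / d < n" using reals_Archimedean2 by blast
  have npos: "n > 0" using n ab assms
    by (metis divide_pos_pos gr0I less_eq_real_def of_nat_0 order_less_asym' diff_gt_0_iff_gt)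
  define x where "x = (\<lambda>i::nat. a + real i * (b - a) / real n)"
  have step: "x (Suc i) - x i = (b - a) / n" for i
    by (simp add: x_def algebra_simps add_divide_distrib[symmetric] diff_divide_distrib[symmetric])
  have sm: "(b - a) / n < d"
    using n assms npos by (simp add: divide_less_eq mult.commute pos_divide_less_eq)
  have pos: "(b - a) / n > 0" using ab npos by simp
  have lt: "x i < x (Suc i)" for i using step[of i] pos by linarith
  have "x 0 = a" "x n = b" using npos by (auto simp: x_def)
  then have "tagged_partition a b x x n"
    unfolding tagged_partition_def using lt less_imp_le by blast
  then show ?thesis using step sm by (intro exI[of _ x] exI[of _ n]) auto
qed

lemma RS_unique:
  assumes "a \<le> b" "has_RS_integral f g a b I" "has_RS_integral f g a b J"
  shows "I = J"
proof (rule ccontr)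
  assume ne: "I \<noteq> J"
  define e where "e = \<bar>I - J\<bar> / 2"
  have e: "e > 0" using ne by (simp add: e_def)
  obtain d1 where d1: "d1 > 0" "\<And>x t n. tagged_partition a b x t n \<and> (\<forall>i<n. x (Suc i) - x i < d1)
        \<Longrightarrow> \<bar>RS_sum f g x t n - I\<bar> < e"
    using assms(2) e unfolding has_RS_integral_def by blast
  obtain d2 where d2: "d2 > 0" "\<And>x t n. tagged_partition a b x t n \<and> (\<forall>i<n. x (Suc i) - x i < d2)
        \<Longrightarrow> \<bar>RS_sum f g x t n - J\<bar> < e"
    using assms(3) e unfolding has_RS_integral_def by blast
  obtain x t n where p: "tagged_partition a b x t n" "\<forall>i<n. x (Suc i) - x i < min d1 d2"
    using partition_exists[OF assms(1), of "min d1 d2"] d1 d2 by auto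
  have "\<bar>RS_sum f g x t n - I\<bar> < e" using d1(2) p by auto
  moreover have "\<bar>RS_sum f g x t n - J\<bar> < e" using d2(2) p by auto
  moreover have "\<bar>I - J\<bar> \<le> \<bar>RS_sum f g x t n - I\<bar> + \<bar>RS_sum f g x t n - J\<bar>" by linarith
  ultimately show False unfolding e_def
    by (smt (verit, del_insts) field_sum_of_halves)
qed

lemma RS_integral_eq:
  assumes "a \<le> b" "has_RS_integral f g a b I"
  shows "RS_integral f g a b = I"
  unfolding RS_integral_def using RS_unique[OF assms(1)] assms(2) by (intro the_equality) auto



lemma partition_mono:
  assumes "tagged_partition a b x t n" "i \<le> j" "j \<le> n"
  shows "x i \<le> x j"
  using assms(2,3)
proof (induction j)
  case 0 then show ?case by simp
next
  case (Suc j)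
  show ?case
  proof (cases "i = Suc j")
    case True then show ?thesis by simp
  next
    case False
    then have "x i \<le> x j" using Suc by simp
    moreover have "x j < x (Suc j)" using assms(1) Suc.prems unfolding tagged_partition_def by auto
    ultimately show ?thesis by simp
  qed
qed

lemma partition_range:
  assumes "tagged_partition a b x t n" "i \<le> n"
  shows "a \<le> x i" "x i \<le> b"
  using partition_mono[OF assms(1), of 0 i] partition_mono[OF assms(1), of i n] assms
  unfolding tagged_partition_def by auto

locale wt =
  fixes v :: "real \<Rightarrow> real"
  assumes wv: "weight v"
begin

lemma v_ge1: "0 \<le> r \<Longrightarrow> r < 1 \<Longrightarrow> 1 \<le> v r"
  using wv unfolding weight_def by auto

lemma v_pos: "0 \<le> r \<Longrightarrow> r < 1 \<Longrightarrow> 0 < v r"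
  using v_ge1[of r] by simp

lemma v_less: "0 \<le> x \<Longrightarrow> x < y \<Longrightarrow> y < 1 \<Longrightarrow> v x < v y"
  using wv unfolding weight_def strict_mono_on_def by auto

lemma v_le: "0 \<le> x \<Longrightarrow> x \<le> y \<Longrightarrow> y < 1 \<Longrightarrow> v x \<le> v y"
  using v_less[of x y] by (cases "x = y") auto

lemma v_cont: "continuous_on {0..<1} v"
  using wv unfolding weight_def by auto

lemma v0: "v 0 = 1"
  using wv unfolding weight_def by auto

lemma v_lim: "filterlim v at_top (at_left 1)"
  using wv unfolding weight_def by auto

lemma v_cont_ab: "0 \<le> a \<Longrightarrow> b < 1 \<Longrightarrow> continuous_on {a..b} v"
  by (rule continuous_on_subset[OF v_cont]) auto

lemma v_inj: "inj_on v {0..<1}"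
  unfolding inj_on_def by (metis atLeastLessThan_iff less_irrefl linorder_neqE_linordered_idom v_less)

definition w where "w = the_inv_into {0..<1} v"

lemma w_v: "0 \<le> x \<Longrightarrow> x < 1 \<Longrightarrow> w (v x) = x"
  unfolding w_def using the_inv_into_f_f[OF v_inj] by auto

lemma v_img:
  assumes "0 \<le> a" "a \<le> b" "b < 1"
  shows "v ` {a..b} = {v a..v b}"
proof
  show "v ` {a..b} \<subseteq> {v a..v b}" using assms v_le by auto
  show "{v a..v b} \<subseteq> v ` {a..b}"
  proof
    fix y assume "y \<in> {v a..v b}"
    then obtain x where "a \<le> x" "x \<le> b" "v x = y"
      using IVT'[of v a y b] v_cont_ab assms by auto
    then show "y \<in> v ` {a..b}" by auto
  qed
qed

lemma w_props:
  assumes "0 \<le> a" "a \<le> b" "b < 1" "s \<in> {v a..v b}"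
  shows "w s \<in> {a..b}" "v (w s) = s"
proof -
  have "s \<in> v ` {a..b}" using v_img[OF assms(1-3)] assms(4) by simp
  then obtain x where x: "x \<in> {a..b}" "s = v x" by auto
  then have "w s = x" using w_v assms by auto
  then show "w s \<in> {a..b}" "v (w s) = s" using x by auto
qed

lemma w_cont:
  assumes "0 \<le> a" "a \<le> b" "b < 1"
  shows "continuous_on {v a..v b} w"
proof -
  have "continuous_on (v ` {a..b}) w"
    by (rule continuous_on_inv) (use v_cont_ab assms w_v in auto)
  then show ?thesis using v_img[OF assms] by simp
qed

lemma comp_cont:
  assumes "0 \<le> a" "a \<le> b" "b < 1" "continuous_on {a..b} f"
  shows "continuous_on {v a..v b} (\<lambda>s. f (w s))"
  by (rule continuous_on_compose2[OF assms(4) w_cont[OF assms(1-3)]]) (use w_props[OF assms(1-3)] in auto)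

lemma integral_split_sum:
  fixes h :: "real \<Rightarrow> real"
  assumes h: "h integrable_on {v a..v b}" and p: "tagged_partition a b x t n"
    and ab: "0 \<le> a" "b < 1" and k: "k \<le> n"
  shows "integral {v a..v (x k)} h = (\<Sum>i<k. integral {v (x i)..v (x (Suc i))} h)"
  using k
proof (induction k)
  case 0
  then show ?case using p unfolding tagged_partition_def by simp
next
  case (Suc k)
  have r: "a \<le> x k" "x k \<le> b" "a \<le> x (Suc k)" "x (Suc k) \<le> b" "x k \<le> x (Suc k)"
    using partition_range[OF p] partition_mono[OF p, of k "Suc k"] Suc.prems by auto
  have le: "v a \<le> v (x k)" "v (x k) \<le> v (x (Suc k))" "v (x (Suc k)) \<le> v b"
    using r ab by (auto intro!: v_le)
  have hi: "h integrable_on {v a..v (x (Suc k))}"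
    by (rule integrable_subinterval_real[OF h]) (use le in auto)
  have "integral {v a..v (x (Suc k))} h = integral {v a..v (x k)} h + integral {v (x k)..v (x (Suc k))} h"
    using Henstock_Kurzweil_Integration.integral_combine[OF le(1,2) hi] by simp
  then show ?case using Suc by simp
qed

lemma RS_has:
  assumes ab: "0 \<le> a" "a \<le> b" "b < 1" and f: "continuous_on {a..b} f"
  shows "has_RS_integral f v a b (integral {v a..v b} (\<lambda>s. f (w s)))"
  unfolding has_RS_integral_def
proof (intro allI impI)
  fix e :: real assume e: "e > 0"
  define h where "h = (\<lambda>s. f (w s))"
  have hc: "continuous_on {v a..v b} h" unfolding h_def by (rule comp_cont[OF ab f])
  have hi: "h integrable_on {v a..v b}" by (rule integrable_continuous_real[OF hc])
  have vab: "v a \<le> v b" using ab v_le by auto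
  define e' where "e' = e / (v b - v a + 1)"
  have e': "e' > 0" using e vab by (simp add: e'_def)
  have uc: "uniformly_continuous_on {a..b} f" by (rule compact_uniformly_continuous[OF f compact_Icc])
  obtain d where d: "d > 0" "\<And>x y. x \<in> {a..b} \<Longrightarrow> y \<in> {a..b} \<Longrightarrow> dist y x < d \<Longrightarrow> dist (f y) (f x) < e'"
    using uc e' unfolding uniformly_continuous_on_def by metis
  show "\<exists>d>0. \<forall>x t n. tagged_partition a b x t n \<and> (\<forall>i<n. x (Suc i) - x i < d) \<longrightarrow>
            \<bar>RS_sum f v x t n - integral {v a..v b} (\<lambda>s. f (w s))\<bar> < e"
  proof (intro exI[of _ d] conjI allI impI)
    show "d > 0" by (rule d)
    fix x t n assume H: "tagged_partition a b x t n \<and> (\<forall>i<n. x (Suc i) - x i < d)"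
    then have p: "tagged_partition a b x t n" and mesh: "\<And>i. i < n \<Longrightarrow> x (Suc i) - x i < d" by auto
    have xn: "x n = b" using p unfolding tagged_partition_def by simp
    have I: "integral {v a..v b} h = (\<Sum>i<n. integral {v (x i)..v (x (Suc i))} h)"
      using integral_split_sum[OF hi p ab(1) ab(3) order_refl] xn by simp
    have trm: "\<bar>f (t i) * (v (x (Suc i)) - v (x i)) - integral {v (x i)..v (x (Suc i))} h\<bar>
        \<le> e' * (v (x (Suc i)) - v (x i))" if i: "i < n" for i
    proof -
      have r: "a \<le> x i" "x i \<le> b" "a \<le> x (Suc i)" "x (Suc i) \<le> b" "x i < x (Suc i)"
          "x i \<le> t i" "t i \<le> x (Suc i)"
        using partition_range[OF p, of i] partition_range[OF p, of "Suc i"] i p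
        unfolding tagged_partition_def by auto
      have le: "v a \<le> v (x i)" "v (x i) \<le> v (x (Suc i))" "v (x (Suc i)) \<le> v b"
        using r ab by (auto intro!: v_le)
      have hi': "h integrable_on {v (x i)..v (x (Suc i))}"
        by (rule integrable_subinterval_real[OF hi]) (use le in auto)
      have c: "f (t i) * (v (x (Suc i)) - v (x i)) = integral {v (x i)..v (x (Suc i))} (\<lambda>s. f (t i))"
        using le by simp
      have "\<bar>integral {v (x i)..v (x (Suc i))} (\<lambda>s. f (t i)) - integral {v (x i)..v (x (Suc i))} h\<bar>
          = norm (integral {v (x i)..v (x (Suc i))} (\<lambda>s. f (t i) - h s))"
        using hi' le by (subst integral_diff) auto
      also have "\<dots> \<le> integral {v (x i)..v (x (Suc i))} (\<lambda>s. e')"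
      proof (rule integral_norm_bound_integral)
        show "(\<lambda>s. f (t i) - h s) integrable_on {v (x i)..v (x (Suc i))}"
          using hi' by (intro integrable_diff) auto
        show "(\<lambda>s. e') integrable_on {v (x i)..v (x (Suc i))}" by (rule integrable_const_ivl)
        fix s assume s: "s \<in> {v (x i)..v (x (Suc i))}"
        have ws: "w s \<in> {x i..x (Suc i)}" using w_props(1)[of "x i" "x (Suc i)" s] s r ab by auto
        have "dist (w s) (t i) < d" using ws r mesh[OF i] by (auto simp: dist_real_def)
        then have "dist (f (w s)) (f (t i)) < e'"
          using d(2)[of "t i" "w s"] ws r by auto
        then show "norm (f (t i) - h s) \<le> e'" by (simp add: h_def dist_real_def abs_minus_commute)
      qed
      also have "\<dots> = e' * (v (x (Suc i)) - v (x i))" using le by simp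
      finally show ?thesis by (simp only: c)
    qed
    have "\<bar>RS_sum f v x t n - integral {v a..v b} h\<bar>
        = \<bar>\<Sum>i<n. (f (t i) * (v (x (Suc i)) - v (x i)) - integral {v (x i)..v (x (Suc i))} h)\<bar>"
      unfolding RS_sum_def I by (simp add: sum_subtractf)
    also have "\<dots> \<le> (\<Sum>i<n. \<bar>f (t i) * (v (x (Suc i)) - v (x i)) - integral {v (x i)..v (x (Suc i))} h\<bar>)"
      by (rule sum_abs)
    also have "\<dots> \<le> (\<Sum>i<n. e' * (v (x (Suc i)) - v (x i)))"
      by (rule sum_mono) (use trm in auto)
    also have "\<dots> = e' * (v b - v a)"
    proof -
      have "(\<Sum>i<n. v (x (Suc i)) - v (x i)) = v (x n) - v (x 0)"
        by (rule sum_lessThan_telescope[where f="\<lambda>i. v (x i)"])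
      then show ?thesis using p unfolding tagged_partition_def by (simp add: sum_distrib_left[symmetric])
    qed
    also have "\<dots> < e"
      using e vab by (simp add: e'_def field_simps)
    finally show "\<bar>RS_sum f v x t n - integral {v a..v b} (\<lambda>s. f (w s))\<bar> < e" unfolding h_def .
  qed
qed

lemma RS_eq:
  assumes "0 \<le> a" "a \<le> b" "b < 1" "continuous_on {a..b} f"
  shows "RS_integral f v a b = integral {v a..v b} (\<lambda>s. f (w s))"
  using RS_integral_eq[OF assms(2) RS_has[OF assms]] .

end


lemma cos_orth:
  fixes m k :: nat
  shows "integral {-pi..pi} (\<lambda>x. cos (real m * x) * cos (real k * x)) =
     (if m = k then (if m = 0 then 2 * pi else pi) else 0)"
proof -
  have eq: "(\<lambda>x. cos (real m * x) * cos (real k * x)) =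
      (\<lambda>x. cos (real_of_int (int m - int k) * x) / 2 + cos (real_of_int (int m + int k) * x) / 2)"
    by (rule ext) (simp add: cos_times_cos left_diff_distrib distrib_right add_divide_distrib)
  have h1: "((\<lambda>x. cos (real_of_int (int m - int k) * x) / 2) has_integral
      ((if int m - int k = 0 then 2 * pi else 0) / 2)) {-pi..pi}"
    by (rule has_integral_divide[OF has_integral_cos_nx])
  have h2: "((\<lambda>x. cos (real_of_int (int m + int k) * x) / 2) has_integral
      ((if int m + int k = 0 then 2 * pi else 0) / 2)) {-pi..pi}"
    by (rule has_integral_divide[OF has_integral_cos_nx])
  have "((\<lambda>x. cos (real m * x) * cos (real k * x)) has_integral
     ((if int m - int k = 0 then 2 * pi else 0) / 2 + (if int m + int k = 0 then 2 * pi else 0) / 2)) {-pi..pi}"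
    unfolding eq by (rule has_integral_add[OF h1 h2])
  then show ?thesis by (auto dest!: integral_unique)
qed

locale ser = wt v for v +
  fixes u :: "complex \<Rightarrow> real" and \<alpha> :: "nat \<Rightarrow> real" and n :: "nat \<Rightarrow> nat" and K :: real
  assumes Kpos: "K > 0"
    and ubd: "\<forall>z. norm z < 1 \<longrightarrow> \<bar>u z\<bar> \<le> K * v (norm z)"
    and usum: "\<forall>r \<phi>. 0 \<le> r \<and> r < 1 \<longrightarrow>
           (\<lambda>j. \<alpha> j * r ^ n j * cos (real (n j) * \<phi>)) sums u (complex_of_real r * cis \<phi>)"
    and npos: "\<forall>j. n j > 0"
    and ninc: "\<forall>j. n j < n (Suc j)"
begin

lemma n_smono: "strict_mono n"
  using ninc by (simp add: strict_mono_Suc_iff)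

lemma n_inj: "inj n"
  using n_smono strict_mono_imp_inj_on by blast

lemma n_ge: "j \<le> n j"
  using n_smono by (rule strict_mono_imp_increasing)

lemma U_bound: "0 \<le> r \<Longrightarrow> r < 1 \<Longrightarrow> \<bar>u (complex_of_real r * cis \<phi>)\<bar> \<le> K * v r"
proof -
  assume "0 \<le> r" "r < 1"
  then have "norm (complex_of_real r * cis \<phi>) = r" by (simp add: norm_mult)
  then show ?thesis using ubd \<open>r < 1\<close> by metis
qed

lemma coef_zero: "0 \<le> \<rho> \<Longrightarrow> \<rho> < 1 \<Longrightarrow> (\<lambda>j. \<alpha> j * \<rho> ^ n j) \<longlonglongrightarrow> 0"
  using usum[rule_format, of \<rho> 0] by (auto dest!: sums_summable summable_LIMSEQ_zero)

lemma abs_summ: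
  assumes r: "0 \<le> r" "r < 1"
  shows "summable (\<lambda>j. \<bar>\<alpha> j\<bar> * r ^ n j)"
proof -
  define \<rho> where "\<rho> = (1 + r) / 2"
  have \<rho>: "0 < \<rho>" "\<rho> < 1" "r < \<rho>" using r by (auto simp: \<rho>_def)
  have "convergent (\<lambda>j. \<alpha> j * \<rho> ^ n j)" using coef_zero[of \<rho>] \<rho> by (auto simp: convergent_def)
  then have "Bseq (\<lambda>j. \<alpha> j * \<rho> ^ n j)" by (rule convergent_imp_Bseq)
  then obtain M where M: "M > 0" "\<And>j. norm (\<alpha> j * \<rho> ^ n j) \<le> M" unfolding Bseq_def by auto
  define q where "q = r / \<rho>"
  have q: "0 \<le> q" "q < 1" using \<rho> r by (auto simp: q_def)
  have bnd: "\<bar>\<alpha> j\<bar> * r ^ n j \<le> M * q ^ j" for j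
  proof -
    have qq: "\<rho> ^ n j * q ^ n j = r ^ n j"
      using \<rho> unfolding q_def power_divide by simp
    have "\<bar>\<alpha> j\<bar> * r ^ n j = (\<bar>\<alpha> j\<bar> * \<rho> ^ n j) * q ^ n j"
      by (simp only: mult.assoc qq)
    also have "\<dots> \<le> M * q ^ n j"
      using M(2)[of j] \<rho> q by (intro mult_right_mono) (simp_all add: abs_mult)
    also have "\<dots> \<le> M * q ^ j"
    proof -
      have "q ^ n j \<le> q ^ j" by (rule power_decreasing[OF n_ge]) (use q in auto)
      then show ?thesis using M(1) by (simp add: mult_left_mono)
    qed
    finally show ?thesis .
  qed
  have gs: "summable (\<lambda>j. M * q ^ j)" by (rule summable_mult, rule summable_geometric) (use q in auto)
  have nrm: "norm (\<bar>\<alpha> j\<bar> * r ^ n j) = \<bar>\<alpha> j\<bar> * r ^ n j" for j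
    using r by (simp add: abs_mult)
  show ?thesis
  proof (rule summable_comparison_test'[OF gs])
    fix j :: nat
    show "norm (\<bar>\<alpha> j\<bar> * r ^ n j) \<le> M * q ^ j" unfolding nrm by (rule bnd)
  qed
qed

lemma U_eq: "0 \<le> r \<Longrightarrow> r < 1 \<Longrightarrow>
   u (complex_of_real r * cis \<phi>) = (\<Sum>j. \<alpha> j * r ^ n j * cos (real (n j) * \<phi>))"
proof -
  assume "0 \<le> r" "r < 1"
  then have "(\<lambda>j. \<alpha> j * r ^ n j * cos (real (n j) * \<phi>)) sums u (complex_of_real r * cis \<phi>)"
    using usum by blast
  then show ?thesis by (rule sums_unique)
qed

lemma U_unif:
  assumes r: "0 \<le> r" "r < 1" and that: "\<And>\<phi>. \<bar>c \<phi>\<bar> \<le> 1"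
  shows "uniform_limit UNIV (\<lambda>N \<phi>. \<Sum>j<N. \<alpha> j * r ^ n j * cos (real (n j) * \<phi>) * c \<phi>)
            (\<lambda>\<phi>. u (complex_of_real r * cis \<phi>) * c \<phi>) sequentially"
proof -
  have "uniform_limit UNIV (\<lambda>N \<phi>. \<Sum>j<N. \<alpha> j * r ^ n j * cos (real (n j) * \<phi>) * c \<phi>)
            (\<lambda>\<phi>. \<Sum>j. \<alpha> j * r ^ n j * cos (real (n j) * \<phi>) * c \<phi>) sequentially"
  proof (rule Weierstrass_m_test[OF _ abs_summ[OF r]])
    fix j \<phi>
    have "\<bar>cos (real (n j) * \<phi>) * c \<phi>\<bar> \<le> 1"
      using that[of \<phi>] by (simp add: abs_mult mult_le_one)
    then have "r ^ n j * (\<bar>cos (real (n j) * \<phi>)\<bar> * \<bar>c \<phi>\<bar>) \<le> r ^ n j"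
      using r by (simp add: abs_mult mult_left_le)
    then have "\<bar>\<alpha> j\<bar> * (r ^ n j * (\<bar>cos (real (n j) * \<phi>)\<bar> * \<bar>c \<phi>\<bar>)) \<le> \<bar>\<alpha> j\<bar> * r ^ n j"
      by (rule mult_left_mono) simp
    then show "norm (\<alpha> j * r ^ n j * cos (real (n j) * \<phi>) * c \<phi>) \<le> \<bar>\<alpha> j\<bar> * r ^ n j"
      using r by (simp add: abs_mult mult.assoc)
  qed
  moreover have "(\<Sum>j. \<alpha> j * r ^ n j * cos (real (n j) * \<phi>) * c \<phi>) = u (complex_of_real r * cis \<phi>) * c \<phi>" for \<phi>
  proof -
    have sm: "summable (\<lambda>j. \<alpha> j * r ^ n j * cos (real (n j) * \<phi>))"
      using usum r sums_summable by blast
    show ?thesis using U_eq[OF r, of \<phi>] suminf_mult2[OF sm, of "c \<phi>"] by simp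
  qed
  ultimately show ?thesis by simp
qed

lemma U_cont:
  assumes r: "0 \<le> r" "r < 1"
  shows "continuous_on UNIV (\<lambda>\<phi>. u (complex_of_real r * cis \<phi>))"
proof -
  have "continuous_on UNIV (\<lambda>\<phi>. u (complex_of_real r * cis \<phi>) * 1)"
    by (rule uniform_limit_theorem[OF _ U_unif[OF r]]) (auto intro!: always_eventually allI continuous_intros)
  then show ?thesis by simp
qed

lemma coef_formula:
  assumes r: "0 \<le> r" "r < 1"
  shows "integral {-pi..pi} (\<lambda>\<phi>. u (complex_of_real r * cis \<phi>) * cos (real (n k) * \<phi>)) = pi * (\<alpha> k * r ^ n k)"
proof -
  define c where "c = (\<lambda>\<phi>. cos (real (n k) * \<phi>))"
  have ul: "uniform_limit {-pi..pi} (\<lambda>N \<phi>. \<Sum>j<N. \<alpha> j * r ^ n j * cos (real (n j) * \<phi>) * c \<phi>)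
            (\<lambda>\<phi>. u (complex_of_real r * cis \<phi>) * c \<phi>) sequentially"
    by (rule uniform_limit_on_subset[OF U_unif[OF r]]) (auto simp: c_def)
  obtain I J where IJ: "\<And>N. ((\<lambda>\<phi>. \<Sum>j<N. \<alpha> j * r ^ n j * cos (real (n j) * \<phi>) * c \<phi>) has_integral I N) {-pi..pi}"
     "((\<lambda>\<phi>. u (complex_of_real r * cis \<phi>) * c \<phi>) has_integral J) {-pi..pi}" "I \<longlonglongrightarrow> J"
    by (rule uniform_limit_integral[OF ul]) (auto simp: c_def intro!: continuous_intros)
  have IN: "I N = pi * (\<alpha> k * r ^ n k)" if N: "N > k" for N
  proof -
    have "I N = integral {-pi..pi} (\<lambda>\<phi>. \<Sum>j<N. \<alpha> j * r ^ n j * cos (real (n j) * \<phi>) * c \<phi>)"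
      using integral_unique[OF IJ(1)[of N]] by simp
    also have "\<dots> = (\<Sum>j<N. integral {-pi..pi} (\<lambda>\<phi>. \<alpha> j * r ^ n j * (cos (real (n j) * \<phi>) * c \<phi>)))"
      by (subst integral_sum) (auto simp: c_def mult.assoc intro!: integrable_continuous_real continuous_intros)
    also have "\<dots> = (\<Sum>j<N. \<alpha> j * r ^ n j * (if n j = n k then pi else 0))"
    proof (intro sum.cong refl)
      fix j
      have "n j \<noteq> 0" using npos by auto
      then show "integral {-pi..pi} (\<lambda>\<phi>. \<alpha> j * r ^ n j * (cos (real (n j) * \<phi>) * c \<phi>)) =
          \<alpha> j * r ^ n j * (if n j = n k then pi else 0)"
        unfolding c_def by (simp add: cos_orth del: of_nat_eq_iff)
    qed
    also have "\<dots> = (\<Sum>j\<in>{k}. \<alpha> j * r ^ n j * (if n j = n k then pi else 0))"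
    proof (rule sum.mono_neutral_right)
      show "{k} \<subseteq> {..<N}" using N by auto
      show "\<forall>i\<in>{..<N} - {k}. \<alpha> i * r ^ n i * (if n i = n k then pi else 0) = 0"
        using n_inj by (auto simp: inj_eq)
    qed simp
    finally show ?thesis by simp
  qed
  have "I \<longlonglongrightarrow> pi * (\<alpha> k * r ^ n k)"
  proof (rule tendsto_eventually)
    show "\<forall>\<^sub>F N in sequentially. I N = pi * (\<alpha> k * r ^ n k)"
      unfolding eventually_sequentially using IN by (intro exI[of _ "Suc k"]) auto
  qed
  then have "J = pi * (\<alpha> k * r ^ n k)" using IJ(3) LIMSEQ_unique by blast
  then show ?thesis using integral_unique[OF IJ(2)] by (simp add: c_def)
qed

end


context ser begin

lemma coef_bound:
  assumes r: "0 \<le> r" "r < 1"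
  shows "\<bar>\<alpha> k\<bar> * r ^ n k \<le> 2 * K * v r"
proof -
  define U where "U = (\<lambda>\<phi>. u (complex_of_real r * cis \<phi>))"
  have cU: "continuous_on UNIV U" unfolding U_def by (rule U_cont[OF r])
  have "pi * (\<bar>\<alpha> k\<bar> * r ^ n k) = \<bar>integral {-pi..pi} (\<lambda>\<phi>. U \<phi> * cos (real (n k) * \<phi>))\<bar>"
    unfolding U_def coef_formula[OF r] using r by (simp add: abs_mult)
  also have "\<dots> \<le> integral {-pi..pi} (\<lambda>\<phi>. K * v r)"
  proof -
    have "norm (integral {-pi..pi} (\<lambda>\<phi>. U \<phi> * cos (real (n k) * \<phi>))) \<le> integral {-pi..pi} (\<lambda>\<phi>. K * v r)"
    proof (rule integral_norm_bound_integral)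
      show "(\<lambda>\<phi>. U \<phi> * cos (real (n k) * \<phi>)) integrable_on {-pi..pi}"
        by (rule integrable_continuous_real) (auto intro!: continuous_intros continuous_on_subset[OF cU])
      show "(\<lambda>\<phi>. K * v r) integrable_on {-pi..pi}" by (rule integrable_const_ivl)
      fix \<phi>
      have "\<bar>U \<phi>\<bar> \<le> K * v r" unfolding U_def by (rule U_bound[OF r])
      moreover have "\<bar>cos (real (n k) * \<phi>)\<bar> \<le> 1" by simp
      ultimately have "\<bar>U \<phi>\<bar> * \<bar>cos (real (n k) * \<phi>)\<bar> \<le> K * v r * 1"
        by (intro mult_mono) auto
      then show "norm (U \<phi> * cos (real (n k) * \<phi>)) \<le> K * v r" by (simp add: abs_mult)
    qed
    then show ?thesis by simp
  qed
  also have "\<dots> = 2 * pi * (K * v r)" by simp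
  finally have "pi * (\<bar>\<alpha> k\<bar> * r ^ n k) \<le> pi * (2 * K * v r)" by (simp add: algebra_simps)
  then show ?thesis by simp
qed

lemma bessel:
  assumes r: "0 \<le> r" "r < 1"
  shows "(\<Sum>j<M. (\<alpha> j * r ^ n j)\<^sup>2) \<le> 2 * (K * v r)\<^sup>2"
proof -
  define U where "U = (\<lambda>\<phi>. u (complex_of_real r * cis \<phi>))"
  define a where "a = (\<lambda>j. \<alpha> j * r ^ n j)"
  define c where "c = (\<lambda>j \<phi>. cos (real (n j) * \<phi>))"
  define S where "S = (\<lambda>\<phi>. \<Sum>j<M. a j * c j \<phi>)"
  define \<Sigma> where "\<Sigma> = (\<Sum>j<M. (a j)\<^sup>2)"
  have cU: "continuous_on UNIV U" unfolding U_def by (rule U_cont[OF r])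
  have cc: "continuous_on UNIV (c j)" for j unfolding c_def by (intro continuous_intros)
  have cS: "continuous_on UNIV S" unfolding S_def c_def by (intro continuous_intros)
  have int: "f integrable_on {-pi..pi}" if "continuous_on UNIV f" for f :: "real \<Rightarrow> real"
    by (rule integrable_continuous_real) (rule continuous_on_subset[OF that], simp)
  have iU2: "(\<lambda>\<phi>. (U \<phi>)\<^sup>2) integrable_on {-pi..pi}" by (rule int) (intro continuous_intros cU)
  have iUS: "(\<lambda>\<phi>. U \<phi> * S \<phi>) integrable_on {-pi..pi}" by (rule int) (intro continuous_intros cU cS)
  have iS2: "(\<lambda>\<phi>. (S \<phi>)\<^sup>2) integrable_on {-pi..pi}" by (rule int) (intro continuous_intros cS)
  have iUc: "(\<lambda>\<phi>. U \<phi> * c j \<phi>) integrable_on {-pi..pi}" for j by (rule int) (intro continuous_intros cU cc)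
  have icc: "(\<lambda>\<phi>. c i \<phi> * c j \<phi>) integrable_on {-pi..pi}" for i j by (rule int) (intro continuous_intros cc)
  have Uc: "integral {-pi..pi} (\<lambda>\<phi>. U \<phi> * c j \<phi>) = pi * a j" for j
    unfolding U_def c_def a_def by (rule coef_formula[OF r])
  have orth: "integral {-pi..pi} (\<lambda>\<phi>. c i \<phi> * c j \<phi>) = (if i = j then pi else 0)" for i j
  proof -
    have "n i \<noteq> 0" using npos by auto
    moreover have "(n i = n j) = (i = j)" using n_inj by (simp add: inj_eq)
    ultimately show ?thesis unfolding c_def by (auto simp: cos_orth simp del: of_nat_eq_iff)
  qed
  have US: "integral {-pi..pi} (\<lambda>\<phi>. U \<phi> * S \<phi>) = pi * \<Sigma>"
  proof -
    have "integral {-pi..pi} (\<lambda>\<phi>. U \<phi> * S \<phi>) = integral {-pi..pi} (\<lambda>\<phi>. \<Sum>j<M. a j * (U \<phi> * c j \<phi>))"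
      unfolding S_def by (simp add: sum_distrib_left algebra_simps)
    also have "\<dots> = (\<Sum>j<M. integral {-pi..pi} (\<lambda>\<phi>. a j * (U \<phi> * c j \<phi>)))"
      by (rule integral_sum) (auto intro!: int continuous_intros cU cc)
    also have "\<dots> = (\<Sum>j<M. a j * (pi * a j))"
      by (simp add: Uc)
    finally show ?thesis unfolding \<Sigma>_def by (simp add: power2_eq_square sum_distrib_left algebra_simps)
  qed
  have SS: "integral {-pi..pi} (\<lambda>\<phi>. (S \<phi>)\<^sup>2) = pi * \<Sigma>"
  proof -
    have "integral {-pi..pi} (\<lambda>\<phi>. (S \<phi>)\<^sup>2) = integral {-pi..pi} (\<lambda>\<phi>. \<Sum>i<M. \<Sum>j<M. a i * a j * (c i \<phi> * c j \<phi>))"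
      unfolding S_def power2_eq_square sum_product by (simp add: algebra_simps)
    also have "\<dots> = (\<Sum>i<M. \<Sum>j<M. integral {-pi..pi} (\<lambda>\<phi>. a i * a j * (c i \<phi> * c j \<phi>)))"
    proof -
      have "integral {-pi..pi} (\<lambda>\<phi>. \<Sum>j<M. a i * a j * (c i \<phi> * c j \<phi>)) =
          (\<Sum>j<M. integral {-pi..pi} (\<lambda>\<phi>. a i * a j * (c i \<phi> * c j \<phi>)))" for i
        by (rule integral_sum) (auto intro!: int continuous_intros cc)
      moreover have "integral {-pi..pi} (\<lambda>\<phi>. \<Sum>i<M. \<Sum>j<M. a i * a j * (c i \<phi> * c j \<phi>)) =
          (\<Sum>i<M. integral {-pi..pi} (\<lambda>\<phi>. \<Sum>j<M. a i * a j * (c i \<phi> * c j \<phi>)))"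
        by (rule integral_sum) (auto intro!: int continuous_intros cc)
      ultimately show ?thesis by simp
    qed
    also have "\<dots> = (\<Sum>i<M. \<Sum>j<M. a i * a j * (if i = j then pi else 0))"
      by (simp add: orth)
    also have "\<dots> = (\<Sum>i<M. a i * a i * pi)"
      by (simp add: if_distrib sum.delta cong: if_cong)
    finally show ?thesis unfolding \<Sigma>_def by (simp add: power2_eq_square sum_distrib_left algebra_simps)
  qed
  have U2: "integral {-pi..pi} (\<lambda>\<phi>. (U \<phi>)\<^sup>2) \<le> integral {-pi..pi} (\<lambda>\<phi>. (K * v r)\<^sup>2)"
  proof (rule integral_le[OF iU2])
    show "(\<lambda>\<phi>. (K * v r)\<^sup>2) integrable_on {-pi..pi}" by (rule integrable_const_ivl)
    fix \<phi>
    have "\<bar>U \<phi>\<bar> \<le> K * v r" unfolding U_def by (rule U_bound[OF r])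
    then show "(U \<phi>)\<^sup>2 \<le> (K * v r)\<^sup>2" by (metis abs_le_square_iff abs_of_nonneg abs_ge_zero order_trans)
  qed
  have "0 \<le> integral {-pi..pi} (\<lambda>\<phi>. (U \<phi> - S \<phi>)\<^sup>2)"
    by (rule integral_nonneg) (auto intro!: int continuous_intros cU cS)
  also have "\<dots> = integral {-pi..pi} (\<lambda>\<phi>. (U \<phi>)\<^sup>2 - 2 * (U \<phi> * S \<phi>) + (S \<phi>)\<^sup>2)"
    by (simp add: power2_eq_square algebra_simps)
  also have "\<dots> = integral {-pi..pi} (\<lambda>\<phi>. (U \<phi>)\<^sup>2) - 2 * integral {-pi..pi} (\<lambda>\<phi>. U \<phi> * S \<phi>)
      + integral {-pi..pi} (\<lambda>\<phi>. (S \<phi>)\<^sup>2)"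
    by (subst integral_add, (auto intro!: int continuous_intros cU cS)[2])
       (subst integral_diff, (auto intro!: int continuous_intros cU cS)[2], simp)
  finally have "pi * \<Sigma> \<le> integral {-pi..pi} (\<lambda>\<phi>. (U \<phi>)\<^sup>2)" unfolding US SS by simp
  also have "\<dots> \<le> 2 * pi * (K * v r)\<^sup>2" using U2 by simp
  finally have "pi * \<Sigma> \<le> pi * (2 * (K * v r)\<^sup>2)" by (simp add: algebra_simps)
  then show ?thesis unfolding \<Sigma>_def a_def by simp
qed

end


lemma bernoulli_ineq:
  fixes x :: real assumes "-1 \<le> x" shows "1 + real m * x \<le> (1 + x) ^ m"
proof (induction m)
  case 0 then show ?case by simp
next
  case (Suc m)
  have "0 \<le> real m * (x * x)" by simp
  then have "1 + real (Suc m) * x \<le> (1 + real m * x) * (1 + x)"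
    by (simp add: algebra_simps)
  also have "\<dots> \<le> (1 + x) ^ m * (1 + x)"
    using Suc assms by (intro mult_right_mono) auto
  finally show ?case by (simp add: mult.commute)
qed

lemma half_pow: "m \<ge> 1 \<Longrightarrow> 1/2 \<le> (1 - 1 / (2 * real m)) ^ m"
proof -
  assume m: "m \<ge> 1"
  have "1 + real m * (- 1 / (2 * real m)) \<le> (1 + (- 1 / (2 * real m))) ^ m"
    by (rule bernoulli_ineq) (use m in \<open>simp add: field_simps\<close>)
  then show ?thesis using m by simp
qed

lemma pow_le_exp:
  fixes r :: real assumes "0 \<le> r" "r \<le> 1"
  shows "r ^ m \<le> exp (- (real m * (1 - r)))"
proof -
  have "r \<le> exp (r - 1)" using exp_ge_add_one_self[of "r - 1"] by simp
  then have "r ^ m \<le> exp (r - 1) ^ m" by (rule power_mono) (use assms in simp)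
  also have "\<dots> = exp (real m * (r - 1))" by (simp add: exp_of_nat_mult)
  finally show ?thesis by (simp add: algebra_simps)
qed

lemma poly_le_exp:
  fixes y :: real assumes "0 \<le> y"
  shows "y ^ k \<le> fact k * exp y"
proof -
  have "(\<Sum>i\<in>{k}. y ^ i /\<^sub>R fact i) \<le> (\<Sum>i. y ^ i /\<^sub>R fact i)"
    by (rule sum_le_suminf) (use assms summable_norm_exp[of y] in \<open>auto simp: abs_of_nonneg\<close>)
  then have "y ^ k / fact k \<le> exp y" by (simp add: exp_def divide_inverse_commute)
  then show ?thesis by (simp add: divide_le_eq mult.commute)
qed

lemma poly_exp_bound:
  fixes x :: real assumes "0 \<le> x"
  shows "x ^ k * exp (- x) \<le> fact k"
  using poly_le_exp[OF assms, of k] by (simp add: exp_minus field_simps)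

lemma pow_diff_le:
  fixes r s :: real assumes "0 \<le> s" "s \<le> r" "r \<le> 1"
  shows "r ^ m - s ^ m \<le> real m * (r - s)"
proof (induction m)
  case 0 then show ?case by simp
next
  case (Suc m)
  have "r ^ Suc m - s ^ Suc m = r * (r ^ m - s ^ m) + s ^ m * (r - s)"
    by (simp add: algebra_simps)
  also have "\<dots> \<le> 1 * (r ^ m - s ^ m) + 1 * (r - s)"
  proof (rule add_mono)
    have "0 \<le> r ^ m - s ^ m" using assms by (simp add: power_mono)
    then show "r * (r ^ m - s ^ m) \<le> 1 * (r ^ m - s ^ m)" using assms by (intro mult_right_mono) auto
    have "s ^ m \<le> 1" using assms by (simp add: power_le_one)
    then show "s ^ m * (r - s) \<le> 1 * (r - s)" using assms by (intro mult_right_mono) auto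
  qed
  finally show ?case using Suc by (simp add: algebra_simps)
qed

lemma exists_q: "\<exists>q::nat. (D::real) \<le> 2 ^ q"
  using real_arch_pow[of 2 D] by (auto intro: less_imp_le)

locale dw = wt v for v +
  fixes D :: real
  assumes dbl: "doubling v D"
begin

definition q :: nat where "q = (SOME q. D \<le> 2 ^ q)"

lemma q: "D \<le> 2 ^ q"
  unfolding q_def using exists_q[of D] by (rule someI_ex)

lemma dbl_step: "0 < d \<Longrightarrow> d \<le> 1/2 \<Longrightarrow> v (1 - d) \<le> D * v (1 - 2 * d)"
  using dbl unfolding doubling_def by auto

lemma D_ge1: "1 \<le> D"
proof -
  have "v (1/2) \<le> D * v 0" using dbl_step[of "1/2"] by simp
  moreover have "1 \<le> v (1/2)" by (rule v_ge1) auto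
  ultimately show ?thesis using v0 by simp
qed

lemma DL_aux:
  "\<forall>d e. 0 < d \<and> d \<le> e \<and> e \<le> 1/2 \<and> e < 2 ^ k * d \<longrightarrow> v (1 - d) \<le> D * (e / d) ^ q * v (1 - e)"
proof (induction k)
  case 0
  then show ?case by auto
next
  case (Suc k)
  show ?case
  proof (intro allI impI)
    fix d e :: real assume H: "0 < d \<and> d \<le> e \<and> e \<le> 1/2 \<and> e < 2 ^ Suc k * d"
    then have d: "0 < d" "d \<le> e" "e \<le> 1/2" "e < 2 ^ Suc k * d" by auto
    have ed: "1 \<le> e / d" using d by simp
    have v1e: "0 < v (1 - e)" using d by (intro v_pos) auto
    show "v (1 - d) \<le> D * (e / d) ^ q * v (1 - e)"
    proof (cases "e < 2 * d")
      case True
      have "v (1 - d) \<le> D * v (1 - 2 * d)" using d by (intro dbl_step) auto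
      also have "\<dots> \<le> D * v (1 - e)" using d True D_ge1 by (intro mult_left_mono v_le) auto
      also have "\<dots> \<le> D * (e / d) ^ q * v (1 - e)"
        using ed D_ge1 v1e by (intro mult_right_mono) (auto simp: one_le_power)
      finally show ?thesis .
    next
      case False
      then have d2: "2 * d \<le> e" by simp
      have IH: "v (1 - 2 * d) \<le> D * (e / (2 * d)) ^ q * v (1 - e)"
        using Suc.IH d d2 by (auto simp: mult.assoc)
      have "v (1 - d) \<le> D * v (1 - 2 * d)" using d d2 by (intro dbl_step) auto
      also have "\<dots> \<le> D * (D * (e / (2 * d)) ^ q * v (1 - e))"
        using IH D_ge1 by (intro mult_left_mono) auto
      also have "\<dots> = (D / 2 ^ q) * (D * (e / d) ^ q * v (1 - e))"
        by (simp add: power_divide field_simps)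
      also have "\<dots> \<le> 1 * (D * (e / d) ^ q * v (1 - e))"
        using q D_ge1 ed v1e by (intro mult_right_mono) (auto simp: divide_le_eq)
      finally show ?thesis by simp
    qed
  qed
qed

lemma DL:
  assumes "0 < d" "d \<le> e" "e \<le> 1/2"
  shows "v (1 - d) \<le> D * (e / d) ^ q * v (1 - e)"
proof -
  obtain k where "e / d < 2 ^ k" using real_arch_pow[of 2 "e / d"] by auto
  then have "e < 2 ^ k * d" using assms by (simp add: divide_less_eq)
  then show ?thesis using DL_aux[of k] assms by blast
qed

lemma DLr:
  assumes r: "1/2 \<le> r" "r < 1" and \<rho>: "0 \<le> \<rho>" "\<rho> < 1" and X: "1 \<le> X" "1 - r \<le> X * (1 - \<rho>)"
  shows "v \<rho> \<le> D * X ^ q * v r"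
proof (cases "\<rho> \<le> r")
  case True
  have "v \<rho> \<le> v r" using True \<rho> r by (intro v_le) auto
  also have "\<dots> \<le> D * X ^ q * v r"
  proof -
    have "1 \<le> D * X ^ q" using D_ge1 X by (simp add: one_le_power order_trans[OF _ mult_mono[of 1 D 1 "X ^ q"]])
    then show ?thesis using v_pos[of r] r by (simp add: mult_le_cancel_right1)
  qed
  finally show ?thesis .
next
  case False
  have "v (1 - (1 - \<rho>)) \<le> D * ((1 - r) / (1 - \<rho>)) ^ q * v (1 - (1 - r))"
    using False r \<rho> by (intro DL) auto
  also have "\<dots> \<le> D * X ^ q * v r"
  proof -
    have "(1 - r) / (1 - \<rho>) \<le> X" using X \<rho> by (simp add: divide_le_eq)
    then have "((1 - r) / (1 - \<rho>)) ^ q \<le> X ^ q" by (rule power_mono) (use r \<rho> in simp)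
    then show ?thesis using D_ge1 v_pos[of r] r by (simp add: mult_right_mono mult_left_mono)
  qed
  finally show ?thesis by simp
qed

end


locale mt = ser v u \<alpha> n K + dw v D for v u \<alpha> n K D +
  fixes lam :: real
  assumes lam1: "1 < lam"
    and lac: "\<forall>j. lam * real (n j) < real (n (Suc j)) \<and> n (Suc j) \<le> 4 * n j"
begin

lemma n_up: "lam ^ k * real (n j) \<le> real (n (j + k))"
proof (induction k)
  case 0 then show ?case by simp
next
  case (Suc k)
  have "lam ^ Suc k * real (n j) = lam * (lam ^ k * real (n j))" by simp
  also have "\<dots> \<le> lam * real (n (j + k))" using Suc lam1 by (intro mult_left_mono) auto
  also have "\<dots> \<le> real (n (j + Suc k))" using lac[rule_format, of "j + k"] by simp
  finally show ?case .
qed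

lemma n_down: "real (n (j + k)) \<le> 4 ^ k * real (n j)"
proof (induction k)
  case 0 then show ?case by simp
next
  case (Suc k)
  have "real (n (j + Suc k)) \<le> 4 * real (n (j + k))" using lac[rule_format, of "j + k"] by simp
  also have "\<dots> \<le> 4 * (4 ^ k * real (n j))" using Suc by simp
  finally show ?case by simp
qed

lemma n_mono: "i \<le> j \<Longrightarrow> n i \<le> n j"
  using n_smono by (simp add: strict_mono_less_eq)

lemma n_ge1: "1 \<le> real (n j)"
  using npos by (simp add: Suc_le_eq)

definition L where "L = lam / (lam - 1)"

lemma n_sum: "(\<Sum>j\<le>N. real (n j)) \<le> real (n N) * L"
proof (induction N)
  case 0
  have "1 \<le> L" using lam1 by (simp add: L_def)
  then show ?case using n_ge1[of 0] by simp
next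
  case (Suc N)
  have "(\<Sum>j\<le>Suc N. real (n j)) \<le> real (n N) * L + real (n (Suc N))" using Suc by simp
  also have "\<dots> \<le> (real (n (Suc N)) / lam) * L + real (n (Suc N))"
  proof -
    have "real (n N) \<le> real (n (Suc N)) / lam" using lac[rule_format, of N] lam1 by (simp add: field_simps)
    moreover have "0 \<le> L" using lam1 by (simp add: L_def)
    ultimately have "real (n N) * L \<le> (real (n (Suc N)) / lam) * L" by (rule mult_right_mono)
    then show ?thesis by simp
  qed
  also have "\<dots> = real (n (Suc N)) * L" using lam1 by (simp add: L_def field_simps)
  finally show ?case .
qed

definition V where "V j = v (1 - 1 / real (n j))"

lemma rho_range: "0 \<le> 1 - 1 / real (n j)" "1 - 1 / real (n j) < 1"
  using n_ge1[of j] by auto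

lemma V_ge1: "1 \<le> V j"
  unfolding V_def using rho_range by (intro v_ge1) auto

lemma V_mono: "i \<le> j \<Longrightarrow> V i \<le> V j"
proof -
  assume "i \<le> j"
  then have "real (n i) \<le> real (n j)" using n_mono by simp
  then have "1 - 1 / real (n i) \<le> 1 - 1 / real (n j)" using n_ge1[of i]
    by (simp add: frac_le)
  then show ?thesis unfolding V_def using rho_range by (intro v_le) auto
qed

definition A where "A = 4 * K * D"

lemma r2_facts:
  shows "1/2 \<le> 1 - 1 / (2 * real (n j))" "1 - 1 / (2 * real (n j)) < 1"
    "1/2 \<le> (1 - 1 / (2 * real (n j))) ^ n j" "v (1 - 1 / (2 * real (n j))) \<le> D * V j"
proof -
  show "1/2 \<le> 1 - 1 / (2 * real (n j))" "1 - 1 / (2 * real (n j)) < 1" using n_ge1[of j] by auto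
  show "1/2 \<le> (1 - 1 / (2 * real (n j))) ^ n j" using half_pow[of "n j"] npos by (simp add: Suc_le_eq)
  have "v (1 - 1 / (2 * real (n j))) \<le> D * v (1 - 2 * (1 / (2 * real (n j))))"
    using n_ge1[of j] by (intro dbl_step) auto
  then show "v (1 - 1 / (2 * real (n j))) \<le> D * V j" by (simp add: V_def)
qed

lemma alpha_bound: "\<bar>\<alpha> j\<bar> \<le> A * V j"
proof -
  define r where "r = 1 - 1 / (2 * real (n j))"
  have r: "0 \<le> r" "r < 1" "1/2 \<le> r ^ n j" "v r \<le> D * V j" using r2_facts[of j] by (auto simp: r_def)
  have "\<bar>\<alpha> j\<bar> * (1/2) \<le> \<bar>\<alpha> j\<bar> * r ^ n j" using r by (intro mult_left_mono) auto
  also have "\<dots> \<le> 2 * K * v r" by (rule coef_bound) (use r in auto)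
  also have "\<dots> \<le> 2 * K * (D * V j)" using r Kpos by (intro mult_left_mono) auto
  finally show ?thesis by (simp add: A_def)
qed

lemma alpha_sq: "(\<Sum>j\<le>M. (\<alpha> j)\<^sup>2) \<le> 8 * K\<^sup>2 * D\<^sup>2 * (V M)\<^sup>2"
proof -
  define r where "r = 1 - 1 / (2 * real (n M))"
  have r: "0 \<le> r" "r < 1" "1/2 \<le> r ^ n M" "v r \<le> D * V M" "r \<le> 1" using r2_facts[of M] by (auto simp: r_def)
  have "(\<Sum>j\<le>M. (\<alpha> j)\<^sup>2) = 4 * (\<Sum>j\<le>M. (\<alpha> j * (1/2))\<^sup>2)"
    by (simp add: sum_distrib_left power2_eq_square)
  also have "\<dots> \<le> 4 * (\<Sum>j<Suc M. (\<alpha> j * r ^ n j)\<^sup>2)"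
  proof -
    have "(\<alpha> j * (1/2))\<^sup>2 \<le> (\<alpha> j * r ^ n j)\<^sup>2" if "j \<le> M" for j
    proof -
      have "r ^ n M \<le> r ^ n j" using r n_mono[OF that] by (intro power_decreasing) auto
      then have "1/2 \<le> r ^ n j" using r by linarith
      then have "\<bar>\<alpha> j\<bar> * (1/2) \<le> \<bar>\<alpha> j\<bar> * r ^ n j" by (rule mult_left_mono) simp
      then have "\<bar>\<alpha> j * (1/2)\<bar> \<le> \<bar>\<alpha> j * r ^ n j\<bar>" using r by (simp add: abs_mult)
      then show ?thesis by (simp only: abs_le_square_iff)
    qed
    then have "(\<Sum>j\<le>M. (\<alpha> j * (1/2))\<^sup>2) \<le> (\<Sum>j\<le>M. (\<alpha> j * r ^ n j)\<^sup>2)" by (intro sum_mono) auto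
    then show ?thesis by (simp add: lessThan_Suc_atMost)
  qed
  also have "\<dots> \<le> 4 * (2 * (K * v r)\<^sup>2)" using bessel[OF r(1,2), of "Suc M"] by simp
  also have "\<dots> \<le> 4 * (2 * (K * (D * V M))\<^sup>2)"
  proof -
    have "K * v r \<le> K * (D * V M)" using r Kpos by (intro mult_left_mono) auto
    moreover have "0 \<le> K * v r" using Kpos v_pos[of r] r by simp
    ultimately show ?thesis by (simp add: power_mono)
  qed
  finally show ?thesis by (simp add: power_mult_distrib)
qed

end


context mt begin

definition M0 :: nat where "M0 = (SOME M. 2 * 4 ^ q \<le> lam ^ M)"

lemma M0: "2 * 4 ^ q \<le> lam ^ M0"
proof -
  have "\<exists>M. 2 * 4 ^ q \<le> lam ^ M" using real_arch_pow[OF lam1, of "2 * 4 ^ q"] by (auto intro: less_imp_le)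
  then show ?thesis unfolding M0_def by (rule someI_ex)
qed

definition G0 where "G0 = fact (2 * q) * exp 1 * fact M0"

lemma keyG:
  assumes x: "1 \<le> x"
  shows "4 ^ (i * q) * x ^ (2 * q) * exp (- (lam ^ i * x)) \<le> G0 * (1/2) ^ i"
proof -
  have li: "1 \<le> lam ^ i" using lam1 by (simp add: one_le_power)
  have "x + (lam ^ i - 1) \<le> lam ^ i * x"
  proof -
    have "0 \<le> (lam ^ i - 1) * (x - 1)" using li x by simp
    then show ?thesis by (simp add: algebra_simps)
  qed
  then have e1: "exp (- (lam ^ i * x)) \<le> exp (- x) * exp (1 - lam ^ i)"
    by (simp add: exp_add[symmetric])
  have e2: "x ^ (2 * q) * exp (- x) \<le> fact (2 * q)" by (rule poly_exp_bound) (use x in simp)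
  have e3: "4 ^ (i * q) * exp (1 - lam ^ i) \<le> exp 1 * fact M0 * (1/2) ^ i"
  proof -
    have p: "(lam ^ i) ^ M0 * exp (- (lam ^ i)) \<le> fact M0" by (rule poly_exp_bound) (use li in simp)
    have lpos: "0 < (lam ^ M0) ^ i" using lam1 by simp
    have "exp (- (lam ^ i)) \<le> fact M0 / (lam ^ M0) ^ i"
      using p lpos by (simp add: field_simps power_mult[symmetric] mult.commute)
    then have "4 ^ (i * q) * exp (- (lam ^ i)) \<le> 4 ^ (i * q) * (fact M0 / (lam ^ M0) ^ i)"
      by (rule mult_left_mono) simp
    also have "\<dots> = fact M0 * (4 ^ q / lam ^ M0) ^ i"
    proof -
      have p4: "(4::real) ^ (i * q) = (4 ^ q) ^ i" by (metis power_mult mult.commute)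
      show ?thesis by (simp add: p4 power_divide)
    qed
    also have "\<dots> \<le> fact M0 * (1/2) ^ i"
    proof -
      have "4 ^ q / lam ^ M0 \<le> 1/2" using M0 lam1 by (simp add: divide_le_eq)
      moreover have "0 \<le> 4 ^ q / lam ^ M0" using lam1 by simp
      ultimately show ?thesis by (intro mult_left_mono power_mono) auto
    qed
    finally have "4 ^ (i * q) * exp (- (lam ^ i)) \<le> fact M0 * (1/2) ^ i" .
    then have "exp 1 * (4 ^ (i * q) * exp (- (lam ^ i))) \<le> exp 1 * (fact M0 * (1/2) ^ i)"
      by (rule mult_left_mono) simp
    moreover have "exp (1 - lam ^ i) = exp 1 * exp (- (lam ^ i))" by (simp add: exp_diff exp_minus field_simps)
    ultimately show ?thesis by (simp add: algebra_simps)
  qed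
  have "4 ^ (i * q) * x ^ (2 * q) * exp (- (lam ^ i * x))
      \<le> 4 ^ (i * q) * x ^ (2 * q) * (exp (- x) * exp (1 - lam ^ i))"
    using e1 x by (intro mult_left_mono) auto
  also have "\<dots> = (x ^ (2 * q) * exp (- x)) * (4 ^ (i * q) * exp (1 - lam ^ i))" by (simp add: algebra_simps)
  also have "\<dots> \<le> fact (2 * q) * (exp 1 * fact M0 * (1/2) ^ i)"
    by (rule mult_mono[OF e2 e3]) (use x in auto)
  finally show ?thesis by (simp add: G0_def algebra_simps)
qed

definition C5 where "C5 = A * D\<^sup>2 * G0"

lemma A_pos: "0 < A" using Kpos D_ge1 by (simp add: A_def)

lemma tail_term:
  assumes r: "1/2 \<le> r" "r \<le> R" and R: "R < 1 - 1 / real (n (Suc N))"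
  shows "\<bar>\<alpha> (Suc N + i)\<bar> * r ^ n (Suc N + i) \<le> C5 * (1/2) ^ i * (v r)\<^sup>2 / v R"
proof -
  define m where "m = real (n (Suc N))"
  define j where "j = Suc N + i"
  define nj where "nj = real (n j)"
  define x where "x = m * (1 - r)"
  have m1: "1 \<le> m" unfolding m_def by (rule n_ge1)
  have R1: "R < 1" "1/2 \<le> R" using R r m1 by (auto simp: m_def) (smt (verit) divide_nonneg_nonneg of_nat_0_le_iff)
  have r1: "r < 1" using r R1 by simp
  have mR: "1 \<le> m * (1 - R)" using R m1 by (simp add: m_def field_simps)
  have x1: "1 \<le> x" using mR r m1 unfolding x_def by (smt (verit) mult_left_mono)
  have xR: "1 - r \<le> x * (1 - R)"
  proof -
    have "(1 - r) * 1 \<le> (1 - r) * (m * (1 - R))" using mR r1 by (intro mult_left_mono) auto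
    then show ?thesis by (simp add: x_def algebra_simps)
  qed
  have li: "1 \<le> lam ^ i" using lam1 by (simp add: one_le_power)
  have nup: "lam ^ i * m \<le> nj" using n_up[of i "Suc N"] by (simp add: m_def nj_def j_def)
  have ndown: "nj \<le> 4 ^ i * m" using n_down[of "Suc N" i] by (simp add: m_def nj_def j_def)
  have "1 * m \<le> lam ^ i * m" using li m1 by (intro mult_right_mono) auto
  then have mnj: "m \<le> nj" using nup by simp
  have nj1: "1 \<le> nj" using mnj m1 by simp
  have X1: "1 \<le> nj * (1 - r)" using mnj x1 r1 unfolding x_def by (smt (verit) mult_right_mono)
  have vr: "0 < v r" using r r1 by (intro v_pos) auto
  have b: "V j \<le> D * (nj * (1 - r)) ^ q * v r"
    unfolding V_def nj_def[symmetric]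
  proof (rule DLr)
    show "1/2 \<le> r" "r < 1" using r r1 by auto
    show "0 \<le> 1 - 1 / nj" "1 - 1 / nj < 1" using nj1 by auto
    show "1 \<le> nj * (1 - r)" by (rule X1)
    show "1 - r \<le> nj * (1 - r) * (1 - (1 - 1 / nj))" using nj1 by simp
  qed
  have c: "(nj * (1 - r)) ^ q \<le> 4 ^ (i * q) * x ^ q"
  proof -
    have "nj * (1 - r) \<le> 4 ^ i * x" using ndown r1 unfolding x_def by (smt (verit) mult_right_mono mult.assoc)
    then have "(nj * (1 - r)) ^ q \<le> (4 ^ i * x) ^ q" by (rule power_mono) (use nj1 r1 in simp)
    then show ?thesis by (simp add: power_mult_distrib power_mult)
  qed
  have d: "r ^ n j \<le> exp (- (lam ^ i * x))"
  proof -
    have "r ^ n j \<le> exp (- (real (n j) * (1 - r)))" by (rule pow_le_exp) (use r r1 in auto)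
    also have "\<dots> \<le> exp (- (lam ^ i * x))"
    proof -
      have "lam ^ i * x \<le> nj * (1 - r)" using nup r1 unfolding x_def
        by (smt (verit) mult_right_mono mult.assoc)
      then show ?thesis by (simp add: nj_def)
    qed
    finally show ?thesis .
  qed
  have e: "v R \<le> D * x ^ q * v r"
    by (rule DLr) (use r r1 R1 x1 xR in auto)
  have vRpos: "0 < v R" using R1 by (intro v_pos) auto
  define E where "E = exp (- (lam ^ i * x))"
  have Vj0: "0 \<le> V j" using V_ge1[of j] by simp
  have "\<bar>\<alpha> j\<bar> * r ^ n j \<le> A * V j * E"
    using alpha_bound[of j] d r by (intro mult_mono) (auto simp: E_def)
  also have "\<dots> \<le> A * (D * (4 ^ (i * q) * x ^ q) * v r) * E"
  proof -
    have "V j \<le> D * (4 ^ (i * q) * x ^ q) * v r"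
      using b c D_ge1 vr by (smt (verit) mult_left_mono mult_right_mono)
    then show ?thesis using A_pos by (intro mult_right_mono mult_left_mono) (auto simp: E_def)
  qed
  also have "\<dots> = (A * D\<^sup>2 * (4 ^ (i * q) * x ^ (2 * q) * E)) * (v r)\<^sup>2 / (D * x ^ q * v r)"
  proof -
    have xx: "x ^ (2 * q) = x ^ q * x ^ q" by (simp add: mult_2 power_add)
    have xx2: "x ^ (q * 2) = x ^ q * x ^ q" by (simp add: mult_2_right power_add)
    show ?thesis using D_ge1 x1 vr by (simp add: xx xx2 field_simps power2_eq_square)
  qed
  also have "\<dots> \<le> (A * D\<^sup>2 * (4 ^ (i * q) * x ^ (2 * q) * E)) * (v r)\<^sup>2 / v R"
    by (rule divide_left_mono[OF e]) (use A_pos vRpos vr D_ge1 x1 in \<open>auto simp: E_def\<close>)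
  also have "\<dots> \<le> (A * D\<^sup>2 * (G0 * (1/2) ^ i)) * (v r)\<^sup>2 / v R"
    using keyG[OF x1, of i] A_pos vRpos unfolding E_def
    by (intro divide_right_mono mult_right_mono mult_left_mono) auto
  finally show ?thesis by (simp add: C5_def j_def algebra_simps)
qed

end


context mt begin

lemma tail_bound:
  assumes r: "1/2 \<le> r" "r \<le> R" and R: "R < 1 - 1 / real (n (Suc N))"
  shows "\<bar>u (complex_of_real r * cis \<phi>) - (\<Sum>j\<le>N. \<alpha> j * r ^ n j * cos (real (n j) * \<phi>))\<bar>
     \<le> 2 * C5 * (v r)\<^sup>2 / v R"
proof -
  define f where "f = (\<lambda>j. \<alpha> j * r ^ n j * cos (real (n j) * \<phi>))"
  have R1: "R < 1" using R n_ge1[of "Suc N"] by (smt (verit) divide_nonneg_nonneg of_nat_0_le_iff)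
  have r1: "0 \<le> r" "r < 1" using r R1 by auto
  have sm: "f sums u (complex_of_real r * cis \<phi>)" unfolding f_def using usum r1 by blast
  have "(\<lambda>i. f (i + Suc N)) sums (u (complex_of_real r * cis \<phi>) - (\<Sum>i<Suc N. f i))"
    by (rule sums_split_initial_segment[OF sm])
  then have eq: "u (complex_of_real r * cis \<phi>) - (\<Sum>j\<le>N. f j) = (\<Sum>i. f (i + Suc N))"
    by (simp add: sums_iff lessThan_Suc_atMost)
  define g where "g = (\<lambda>i::nat. (C5 * (v r)\<^sup>2 / v R) * (1/2) ^ i)"
  have gs: "g sums ((C5 * (v r)\<^sup>2 / v R) * 2)"
    unfolding g_def using geometric_sums[of "1/2::real"] by (intro sums_mult) simp
  have "norm (\<Sum>i. f (i + Suc N)) \<le> suminf g"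
  proof (rule norm_suminf_le)
    show "summable g" using gs by (rule sums_summable)
    fix i
    have "norm (f (i + Suc N)) \<le> \<bar>\<alpha> (Suc N + i)\<bar> * r ^ n (Suc N + i)"
    proof -
      have "\<bar>cos (real (n (i + Suc N)) * \<phi>)\<bar> \<le> 1" by simp
      then have "\<bar>\<alpha> (i + Suc N)\<bar> * r ^ n (i + Suc N) * \<bar>cos (real (n (i + Suc N)) * \<phi>)\<bar>
          \<le> \<bar>\<alpha> (i + Suc N)\<bar> * r ^ n (i + Suc N) * 1"
        by (intro mult_left_mono) (use r1 in auto)
      then show ?thesis using r1 by (simp add: f_def abs_mult add.commute)
    qed
    also have "\<dots> \<le> g i" using tail_term[OF r R, of i] by (simp add: g_def algebra_simps)
    finally show "norm (f (i + Suc N)) \<le> g i" .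
  qed
  also have "\<dots> = 2 * C5 * (v r)\<^sup>2 / v R" using gs by (simp add: sums_iff)
  finally show ?thesis using eq by (simp add: f_def)
qed

definition C6 where "C6 = K + 2 * C5 + A * L"

lemma P_bound:
  assumes N: "2 \<le> n N" and r: "1 - 1 / real (n N) \<le> r" "r < 1"
  shows "\<bar>\<Sum>j\<le>N. \<alpha> j * r ^ n j * cos (real (n j) * \<phi>)\<bar> \<le> C6 * V N"
proof -
  define \<rho> where "\<rho> = 1 - 1 / real (n N)"
  have nN: "2 \<le> real (n N)" using N by simp
  have \<rho>: "1/2 \<le> \<rho>" "\<rho> < 1" using nN by (auto simp: \<rho>_def field_simps)
  have \<rho>R: "\<rho> < 1 - 1 / real (n (Suc N))"
  proof -
    have "real (n N) < real (n (Suc N))" using ninc by simp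
    then have "1 / real (n (Suc N)) < 1 / real (n N)" using nN by (intro divide_strict_left_mono) auto
    then show ?thesis by (simp add: \<rho>_def)
  qed
  have vrho: "v \<rho> = V N" by (simp add: V_def \<rho>_def)
  have vrpos: "0 < v \<rho>" using \<rho> by (intro v_pos) auto
  define P where "P = (\<lambda>s. \<Sum>j\<le>N. \<alpha> j * s ^ n j * cos (real (n j) * \<phi>))"
  have t: "\<bar>u (complex_of_real \<rho> * cis \<phi>) - P \<rho>\<bar> \<le> 2 * C5 * V N"
  proof -
    have "\<bar>u (complex_of_real \<rho> * cis \<phi>) - P \<rho>\<bar> \<le> 2 * C5 * (v \<rho>)\<^sup>2 / v \<rho>"
      unfolding P_def by (rule tail_bound) (use \<rho> \<rho>R in auto)
    also have "\<dots> = 2 * C5 * V N" using vrpos vrho by (simp add: power2_eq_square)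
    finally show ?thesis .
  qed
  have U: "\<bar>u (complex_of_real \<rho> * cis \<phi>)\<bar> \<le> K * V N"
    using U_bound[of \<rho> \<phi>] \<rho> vrho by simp
  have d: "\<bar>P r - P \<rho>\<bar> \<le> A * L * V N"
  proof -
    have "\<bar>P r - P \<rho>\<bar> = \<bar>\<Sum>j\<le>N. \<alpha> j * cos (real (n j) * \<phi>) * (r ^ n j - \<rho> ^ n j)\<bar>"
      unfolding P_def by (simp add: sum_subtractf[symmetric] algebra_simps)
    also have "\<dots> \<le> (\<Sum>j\<le>N. \<bar>\<alpha> j * cos (real (n j) * \<phi>) * (r ^ n j - \<rho> ^ n j)\<bar>)"
      by (rule sum_abs)
    also have "\<dots> \<le> (\<Sum>j\<le>N. (A * V N) * (real (n j) * (1 / real (n N))))"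
    proof (rule sum_mono)
      fix j assume j: "j \<in> {..N}"
      have a: "\<bar>\<alpha> j\<bar> \<le> A * V N" using alpha_bound[of j] V_mono[of j N] j A_pos
        by (smt (verit) atMost_iff mult_left_mono)
      have c: "\<bar>cos (real (n j) * \<phi>)\<bar> \<le> 1" by simp
      have p0: "0 \<le> r ^ n j - \<rho> ^ n j" using \<rho> r by (simp add: \<rho>_def power_mono)
      have p: "r ^ n j - \<rho> ^ n j \<le> real (n j) * (r - \<rho>)" by (rule pow_diff_le) (use \<rho> r in \<open>auto simp: \<rho>_def\<close>)
      also have "\<dots> \<le> real (n j) * (1 / real (n N))" using r by (intro mult_left_mono) (auto simp: \<rho>_def)
      finally have p': "\<bar>r ^ n j - \<rho> ^ n j\<bar> \<le> real (n j) * (1 / real (n N))" using p0 by simp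
      have "\<bar>\<alpha> j * cos (real (n j) * \<phi>) * (r ^ n j - \<rho> ^ n j)\<bar>
          = \<bar>\<alpha> j\<bar> * \<bar>cos (real (n j) * \<phi>)\<bar> * \<bar>r ^ n j - \<rho> ^ n j\<bar>" by (simp add: abs_mult)
      also have "\<dots> \<le> (A * V N) * 1 * (real (n j) * (1 / real (n N)))"
        using A_pos V_ge1[of N] by (intro mult_mono a c p') auto
      finally show "\<bar>\<alpha> j * cos (real (n j) * \<phi>) * (r ^ n j - \<rho> ^ n j)\<bar>
          \<le> (A * V N) * (real (n j) * (1 / real (n N)))" by simp
    qed
    also have "\<dots> = (A * V N / real (n N)) * (\<Sum>j\<le>N. real (n j))"
      by (simp add: sum_distrib_left)
    also have "\<dots> \<le> (A * V N / real (n N)) * (real (n N) * L)"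
      by (rule mult_left_mono[OF n_sum]) (use A_pos V_ge1[of N] nN in auto)
    also have "\<dots> = A * L * V N" using nN by simp
    finally show ?thesis .
  qed
  have "\<bar>P r\<bar> \<le> \<bar>u (complex_of_real \<rho> * cis \<phi>)\<bar> + \<bar>u (complex_of_real \<rho> * cis \<phi>) - P \<rho>\<bar> + \<bar>P r - P \<rho>\<bar>"
    by linarith
  also have "\<dots> \<le> K * V N + 2 * C5 * V N + A * L * V N" using U t d by linarith
  also have "\<dots> = C6 * V N" by (simp add: C6_def algebra_simps)
  finally show ?thesis unfolding P_def .
qed

end


lemma inv_sq_has_int:
  fixes a b :: real assumes "0 < a" "a \<le> b"
  shows "((\<lambda>s. 1 / s\<^sup>2) has_integral (1/a - 1/b)) {a..b}"
proof -
  have "((\<lambda>s. 1 / s\<^sup>2) has_integral ((- 1 / b) - (- 1 / a))) {a..b}"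
  proof (rule fundamental_theorem_of_calculus[OF assms(2)])
    fix s assume s: "s \<in> {a..b}"
    then have "s \<noteq> 0" using assms by auto
    then show "((\<lambda>s. - 1 / s) has_vector_derivative 1 / s\<^sup>2) (at s within {a..b})"
      unfolding has_real_derivative_iff_has_vector_derivative[symmetric]
      by (auto intro!: derivative_eq_intros simp: power2_eq_square)
  qed
  then show ?thesis by simp
qed

lemma int_le_inv_sq:
  fixes h :: "real \<Rightarrow> real"
  assumes "0 < a" "a \<le> b" "h integrable_on {a..b}" "\<And>s. s \<in> {a..b} \<Longrightarrow> h s \<le> 1 / s\<^sup>2"
  shows "integral {a..b} h \<le> 1 / a"
proof -
  have "integral {a..b} h \<le> integral {a..b} (\<lambda>s. 1 / s\<^sup>2)"
    by (rule integral_le[OF assms(3)]) (use inv_sq_has_int[OF assms(1,2)] assms(4) in auto)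
  also have "\<dots> = 1/a - 1/b" using inv_sq_has_int[OF assms(1,2)] by (rule integral_unique)
  also have "\<dots> \<le> 1/a" using assms by simp
  finally show ?thesis .
qed

lemma int_le_const:
  fixes h :: "real \<Rightarrow> real"
  assumes "a \<le> b" "h integrable_on {a..b}" "\<And>s. s \<in> {a..b} \<Longrightarrow> h s \<le> C"
  shows "integral {a..b} h \<le> C * (b - a)"
proof -
  have "integral {a..b} h \<le> integral {a..b} (\<lambda>s. C)"
    by (rule integral_le[OF assms(2)]) (use assms(3) in auto)
  then show ?thesis using assms(1) by (simp add: mult.commute)
qed

lemma mono_lim_left:
  fixes g :: "real \<Rightarrow> real"
  assumes a: "a < 1" and mono: "\<And>x y. a \<le> x \<Longrightarrow> x \<le> y \<Longrightarrow> y < 1 \<Longrightarrow> g x \<le> g y"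
    and bd: "\<And>x. a \<le> x \<Longrightarrow> x < 1 \<Longrightarrow> g x \<le> B"
  shows "(g \<longlongrightarrow> Sup (g ` {a..<1})) (at_left 1)"
proof (rule increasing_tendsto)
  have bdd: "bdd_above (g ` {a..<1})" using bd by (auto intro!: bdd_aboveI)
  have ne: "g ` {a..<1} \<noteq> {}" using a by auto
  have ev: "eventually (\<lambda>x. a < x \<and> x < 1) (at_left (1::real))"
    using a by (auto simp: eventually_at_left intro!: exI[of _ a])
  show "eventually (\<lambda>x. g x \<le> Sup (g ` {a..<1})) (at_left 1)"
    using ev by eventually_elim (auto intro!: cSup_upper bdd)
  fix y assume y: "y < Sup (g ` {a..<1})"
  then obtain x0 where x0: "x0 \<in> {a..<1}" "y < g x0" using less_cSup_iff[OF ne bdd] by auto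
  have "eventually (\<lambda>x. x0 < x \<and> x < 1) (at_left (1::real))"
    using x0 by (auto simp: eventually_at_left intro!: exI[of _ x0])
  then show "eventually (\<lambda>x. y < g x) (at_left 1)"
    by eventually_elim (use x0 mono in \<open>smt (verit) atLeastLessThan_iff\<close>)
qed

context mt begin

lemma U_cont_r:
  assumes R: "0 \<le> R" "R < 1"
  shows "continuous_on {0..R} (\<lambda>r. u (complex_of_real r * cis \<phi>))"
proof -
  have ul: "uniform_limit {0..R} (\<lambda>N r. \<Sum>j<N. \<alpha> j * r ^ n j * cos (real (n j) * \<phi>))
      (\<lambda>r. \<Sum>j. \<alpha> j * r ^ n j * cos (real (n j) * \<phi>)) sequentially"
  proof (rule Weierstrass_m_test[OF _ abs_summ[OF R]])
    fix j r assume r: "r \<in> {0..R}"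
    have "\<bar>\<alpha> j\<bar> * r ^ n j * \<bar>cos (real (n j) * \<phi>)\<bar> \<le> \<bar>\<alpha> j\<bar> * R ^ n j * 1"
      using r by (intro mult_mono mult_left_mono power_mono) auto
    then show "norm (\<alpha> j * r ^ n j * cos (real (n j) * \<phi>)) \<le> \<bar>\<alpha> j\<bar> * R ^ n j"
      using r by (simp add: abs_mult)
  qed
  have c: "continuous_on {0..R} (\<lambda>r. \<Sum>j. \<alpha> j * r ^ n j * cos (real (n j) * \<phi>))"
  proof (rule uniform_limit_theorem[OF _ ul])
    show "\<forall>\<^sub>F N in sequentially. continuous_on {0..R} (\<lambda>r. \<Sum>j<N. \<alpha> j * r ^ n j * cos (real (n j) * \<phi>))"
      by (intro always_eventually allI continuous_intros)
  qed simp
  have eq: "(\<Sum>j. \<alpha> j * r ^ n j * cos (real (n j) * \<phi>)) = u (complex_of_real r * cis \<phi>)"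
    if "r \<in> {0..R}" for r
  proof -
    have "0 \<le> r" "r < 1" using that R by auto
    then show ?thesis by (rule U_eq[symmetric])
  qed
  show ?thesis by (rule continuous_on_eq[OF c eq])
qed

lemma fU_cont:
  assumes "0 \<le> a" "b < 1"
  shows "continuous_on {a..b} (\<lambda>r. u (complex_of_real r * cis \<phi>) / (v r)\<^sup>2)"
proof (cases "a \<le> b")
  case True
  have "continuous_on {a..b} (\<lambda>r. u (complex_of_real r * cis \<phi>))"
    by (rule continuous_on_subset[OF U_cont_r[of b]]) (use assms True in auto)
  moreover have "continuous_on {a..b} v" using v_cont_ab assms by auto
  moreover have "\<forall>r\<in>{a..b}. (v r)\<^sup>2 \<noteq> 0"
  proof
    fix r assume "r \<in> {a..b}"
    then have "0 < v r" using v_pos assms by auto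
    then show "(v r)\<^sup>2 \<noteq> 0" by simp
  qed
  ultimately show ?thesis by (intro continuous_intros) auto
next
  case False then show ?thesis by simp
qed

lemma fj_cont:
  assumes "0 \<le> a" "b < 1"
  shows "continuous_on {a..b} (\<lambda>r. r ^ m / (v r)\<^sup>2)"
proof -
  have "\<forall>r\<in>{a..b}. (v r)\<^sup>2 \<noteq> 0"
  proof
    fix r assume "r \<in> {a..b}"
    then have "0 < v r" using v_pos assms by auto
    then show "(v r)\<^sup>2 \<noteq> 0" by simp
  qed
  then show ?thesis using v_cont_ab[OF assms] by (intro continuous_intros) auto
qed

definition C0 where "C0 = D\<^sup>2 * fact (2 * q)"

lemma fj_bound2:
  assumes r: "1/2 \<le> r" "r \<le> 1 - 1 / real (n j)"
  shows "r ^ n j * (V j)\<^sup>2 \<le> C0 * (v r)\<^sup>2"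
proof -
  define X where "X = real (n j) * (1 - r)"
  have nj: "1 \<le> real (n j)" by (rule n_ge1)
  have r1: "r < 1" using r nj by (smt (verit) divide_pos_pos)
  have X1: "1 \<le> X" using r nj by (simp add: X_def field_simps)
  have Vj: "V j \<le> D * X ^ q * v r"
    unfolding V_def
  proof (rule DLr)
    show "1/2 \<le> r" "r < 1" using r r1 by auto
    show "0 \<le> 1 - 1 / real (n j)" "1 - 1 / real (n j) < 1" using rho_range by auto
    show "1 \<le> X" by (rule X1)
    show "1 - r \<le> X * (1 - (1 - 1 / real (n j)))" using nj by (simp add: X_def)
  qed
  have e: "r ^ n j \<le> exp (- X)" unfolding X_def by (rule pow_le_exp) (use r r1 in auto)
  have vr: "0 < v r" using r r1 by (intro v_pos) auto
  have "r ^ n j * (V j)\<^sup>2 \<le> exp (- X) * (D * X ^ q * v r)\<^sup>2"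
    using e Vj V_ge1[of j] by (intro mult_mono power_mono) auto
  also have "\<dots> = D\<^sup>2 * (X ^ (2 * q) * exp (- X)) * (v r)\<^sup>2"
  proof -
    have xq: "(X ^ q)\<^sup>2 = X ^ (2 * q)" by (simp add: power_mult[symmetric] mult.commute)
    show ?thesis by (simp only: power_mult_distrib xq) (simp only: mult_ac)
  qed
  also have "\<dots> \<le> D\<^sup>2 * fact (2 * q) * (v r)\<^sup>2"
    using poly_exp_bound[of X "2 * q"] X1 by (intro mult_right_mono mult_left_mono) auto
  finally show ?thesis by (simp add: C0_def)
qed

end


context mt begin

definition fj where "fj j = (\<lambda>r. r ^ n j / (v r)\<^sup>2)"
definition Jj where "Jj j R = RS_integral (fj j) v (1/2) R"
definition cj where "cj j = RS_integral_to_1 (fj j) v (1/2)"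
definition C4 where "C4 = C0 + 1"

lemma hj_cont:
  assumes "1/2 \<le> a" "a \<le> b" "b < 1"
  shows "continuous_on {v a..v b} (\<lambda>s. fj j (w s))"
  using comp_cont[of a b "fj j"] fj_cont[of a b "n j"] assms by (simp add: fj_def)

lemma hj_int:
  assumes "1/2 \<le> a" "a \<le> b" "b < 1"
  shows "(\<lambda>s. fj j (w s)) integrable_on {v a..v b}"
  by (rule integrable_continuous_real[OF hj_cont[OF assms]])

lemma hj_pt:
  assumes "1/2 \<le> a" "a \<le> b" "b < 1" "s \<in> {v a..v b}"
  shows "0 \<le> fj j (w s)" "fj j (w s) \<le> 1 / s\<^sup>2"
proof -
  have ws: "w s \<in> {a..b}" "v (w s) = s" using w_props[of a b s] assms by auto
  then have r: "0 \<le> w s" "w s \<le> 1" using assms by auto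
  show "0 \<le> fj j (w s)" using r by (simp add: fj_def)
  have "w s ^ n j \<le> 1" using r by (simp add: power_le_one)
  then show "fj j (w s) \<le> 1 / s\<^sup>2" using ws by (simp add: fj_def divide_right_mono)
qed

lemma J_eq:
  assumes "1/2 \<le> R" "R < 1"
  shows "Jj j R = integral {v (1/2)..v R} (\<lambda>s. fj j (w s))"
  unfolding Jj_def by (rule RS_eq) (use assms fj_cont[of "1/2" R "n j"] in \<open>auto simp: fj_def\<close>)

lemma J_split:
  assumes "1/2 \<le> R" "R \<le> R'" "R' < 1"
  shows "Jj j R' = Jj j R + integral {v R..v R'} (\<lambda>s. fj j (w s))"
proof -
  have le: "v (1/2) \<le> v R" "v R \<le> v R'" using assms by (auto intro!: v_le)
  show ?thesis
    using Henstock_Kurzweil_Integration.integral_combine[OF le hj_int[of "1/2" R' j]] assms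
      J_eq[of R j] J_eq[of R' j] by simp
qed

lemma J_incr:
  assumes "1/2 \<le> R" "R \<le> R'" "R' < 1"
  shows "Jj j R \<le> Jj j R'"
proof -
  have "0 \<le> integral {v R..v R'} (\<lambda>s. fj j (w s))"
    by (rule integral_nonneg[OF hj_int]) (use assms hj_pt(1)[of R R'] in auto)
  then show ?thesis using J_split[OF assms] by simp
qed

lemma V_pt:
  assumes "1/2 \<le> a" "a \<le> b" "b < 1" "s \<in> {v a..v b}" "s \<le> V j"
  shows "fj j (w s) \<le> C0 / (V j)\<^sup>2"
proof -
  have ws: "w s \<in> {a..b}" "v (w s) = s" using w_props[of a b s] assms by auto
  have le: "w s \<le> 1 - 1 / real (n j)"
  proof (rule ccontr)
    assume "\<not> ?thesis"
    then have "v (1 - 1 / real (n j)) < v (w s)" using ws assms rho_range by (intro v_less) auto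
    then show False using assms ws by (simp add: V_def)
  qed
  have "w s ^ n j * (V j)\<^sup>2 \<le> C0 * (v (w s))\<^sup>2" by (rule fj_bound2) (use ws assms le in auto)
  moreover have "0 < s" using ws assms v_pos[of "w s"] by auto
  moreover have "0 < V j" using V_ge1[of j] by simp
  ultimately show ?thesis using ws by (simp add: fj_def field_simps)
qed

lemma C0_nonneg: "0 \<le> C0" by (simp add: C0_def)

lemma J_bound:
  assumes R: "1/2 \<le> R" "R < 1"
  shows "Jj j R \<le> C4 / V j"
proof -
  define a where "a = v (1/2)"
  define b where "b = v R"
  have a: "1 \<le> a" unfolding a_def by (rule v_ge1) auto
  have ab: "a \<le> b" unfolding a_def b_def using R by (intro v_le) auto
  have Vj: "1 \<le> V j" by (rule V_ge1)
  have J: "Jj j R = integral {a..b} (\<lambda>s. fj j (w s))" unfolding a_def b_def by (rule J_eq[OF R])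
  have hi: "(\<lambda>s. fj j (w s)) integrable_on {a..b}" unfolding a_def b_def by (rule hj_int) (use R in auto)
  have pt1: "fj j (w s) \<le> 1 / s\<^sup>2" if "s \<in> {a..b}" for s
    using hj_pt(2)[of "1/2" R s j] that R unfolding a_def b_def by auto
  have pt2: "fj j (w s) \<le> C0 / (V j)\<^sup>2" if "s \<in> {a..b}" "s \<le> V j" for s
    using V_pt[of "1/2" R s j] that R unfolding a_def b_def by auto
  have C0V: "C0 / (V j)\<^sup>2 * V j = C0 / V j" using Vj by (simp add: power2_eq_square)
  consider "V j \<le> a" | "b \<le> V j" | "a < V j" "V j < b" by linarith
  then show ?thesis
  proof cases
    case 1
    have "Jj j R \<le> 1 / a" unfolding J by (rule int_le_inv_sq[OF _ ab hi pt1]) (use a in auto)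
    also have "\<dots> \<le> 1 / V j" using 1 Vj by (simp add: frac_le)
    also have "\<dots> \<le> C4 / V j" using Vj C0_nonneg by (simp add: C4_def divide_right_mono)
    finally show ?thesis .
  next
    case 2
    have "Jj j R \<le> C0 / (V j)\<^sup>2 * (b - a)" unfolding J by (rule int_le_const[OF ab hi pt2]) (use 2 in auto)
    also have "\<dots> \<le> C0 / (V j)\<^sup>2 * V j" using 2 a C0_nonneg by (intro mult_left_mono) auto
    also have "\<dots> \<le> C4 / V j" using C0V Vj by (simp add: C4_def divide_right_mono)
    finally show ?thesis .
  next
    case 3
    have hi1: "(\<lambda>s. fj j (w s)) integrable_on {a..V j}" by (rule integrable_subinterval_real[OF hi]) (use 3 in auto)
    have hi2: "(\<lambda>s. fj j (w s)) integrable_on {V j..b}" by (rule integrable_subinterval_real[OF hi]) (use 3 in auto)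
    have "Jj j R = integral {a..V j} (\<lambda>s. fj j (w s)) + integral {V j..b} (\<lambda>s. fj j (w s))"
      unfolding J using Henstock_Kurzweil_Integration.integral_combine[of a "V j" b "\<lambda>s. fj j (w s)"] 3 hi by simp
    also have "\<dots> \<le> C0 / (V j)\<^sup>2 * (V j - a) + 1 / V j"
    proof (rule add_mono)
      show "integral {a..V j} (\<lambda>s. fj j (w s)) \<le> C0 / (V j)\<^sup>2 * (V j - a)"
        by (rule int_le_const[OF _ hi1]) (use 3 pt2 in auto)
      show "integral {V j..b} (\<lambda>s. fj j (w s)) \<le> 1 / V j"
        by (rule int_le_inv_sq[OF _ _ hi2]) (use 3 Vj pt1 in auto)
    qed
    also have "\<dots> \<le> C0 / (V j)\<^sup>2 * V j + 1 / V j"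
      using a C0_nonneg by (intro add_mono mult_left_mono) auto
    also have "\<dots> = C4 / V j" using C0V by (simp add: C4_def add_divide_distrib)
    finally show ?thesis .
  qed
qed

lemma J_nonneg:
  assumes R: "1/2 \<le> R" "R < 1"
  shows "0 \<le> Jj j R"
proof -
  have "0 \<le> integral {v (1/2)..v R} (\<lambda>s. fj j (w s))"
    by (rule integral_nonneg[OF hj_int[of "1/2" R j]]) (use R hj_pt(1)[of "1/2" R _ j] in auto)
  then show ?thesis using J_eq[OF R, of j] by simp
qed

lemma J_lim: "(Jj j \<longlongrightarrow> cj j) (at_left 1)"
proof -
  have t: "(Jj j \<longlongrightarrow> Sup (Jj j ` {1/2..<1})) (at_left 1)"
    by (rule mono_lim_left[where B="C4 / V j"]) (auto intro: J_incr J_bound)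
  have "cj j = Lim (at_left 1) (Jj j)"
    unfolding cj_def RS_integral_to_1_def Jj_def by (simp add: fun_eq_iff)
  also have "\<dots> = Sup (Jj j ` {1/2..<1})" using t by (intro tendsto_Lim) auto
  finally show ?thesis using t by simp
qed

lemma cj_bounds: "0 \<le> cj j" "cj j \<le> C4 / V j"
proof -
  have ev: "eventually (\<lambda>R. 1/2 \<le> R \<and> R < 1) (at_left (1::real))"
    using eventually_at_left_real[of "1/2" "1::real"] by (rule eventually_mono) auto
  show "0 \<le> cj j"
    by (rule tendsto_lowerbound[OF J_lim]) (use ev J_nonneg in \<open>auto elim: eventually_mono\<close>)
  show "cj j \<le> C4 / V j"
    by (rule tendsto_upperbound[OF J_lim]) (use ev J_bound in \<open>auto elim: eventually_mono\<close>)
qed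

end


context mt begin

lemma part1:
  assumes N: "2 \<le> n N" and R: "1 - 1 / real (n N) \<le> R" "R < 1 - 1 / real (n (Suc N))"
  shows "\<bar>RS_integral (\<lambda>r. u (complex_of_real r * cis \<phi>) / (v r)\<^sup>2) v (1/2) R
           - (\<Sum>j\<le>N. \<alpha> j * cj j * cos (real (n j) * \<phi>))\<bar> \<le> 2 * C5 + C6"
proof -
  have nN: "2 \<le> real (n N)" using N by simp
  have "1 / real (n N) \<le> 1/2" using nN by (simp add: divide_le_eq)
  then have R0: "1/2 \<le> R" using R(1) by linarith
  have "0 < 1 / real (n (Suc N))" using n_ge1[of "Suc N"] by simp
  then have R1: "R < 1" using R(2) by linarith
  define a where "a = v (1/2)"
  have a1: "1 \<le> a" unfolding a_def by (rule v_ge1) auto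
  have avR: "a \<le> v R" unfolding a_def using R0 R1 by (intro v_le) auto
  have vRpos: "0 < v R" using R0 R1 by (intro v_pos) auto
  define U where "U = (\<lambda>r. u (complex_of_real r * cis \<phi>))"
  define P where "P = (\<lambda>r. \<Sum>j\<le>N. \<alpha> j * r ^ n j * cos (real (n j) * \<phi>))"
  define co where "co = (\<lambda>j. \<alpha> j * cos (real (n j) * \<phi>))"
  have Pfj: "P r / (v r)\<^sup>2 = (\<Sum>j\<le>N. co j * fj j r)" for r
    unfolding P_def co_def fj_def by (simp add: sum_divide_distrib algebra_simps)
  have I: "RS_integral (\<lambda>r. U r / (v r)\<^sup>2) v (1/2) R = integral {a..v R} (\<lambda>s. U (w s) / (v (w s))\<^sup>2)"
    unfolding a_def U_def by (rule RS_eq) (use R0 R1 fU_cont[of "1/2" R \<phi>] in auto)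
  have cU: "continuous_on {a..v R} (\<lambda>s. U (w s) / (v (w s))\<^sup>2)"
    unfolding a_def U_def using comp_cont[of "1/2" R "\<lambda>r. u (complex_of_real r * cis \<phi>) / (v r)\<^sup>2"]
      fU_cont[of "1/2" R \<phi>] R0 R1 by simp
  have cP: "continuous_on {a..v R} (\<lambda>s. P (w s) / (v (w s))\<^sup>2)"
  proof -
    have "continuous_on {a..v R} (\<lambda>s. \<Sum>j\<le>N. co j * fj j (w s))"
      using hj_cont[of "1/2" R] R0 R1 unfolding a_def by (intro continuous_intros) auto
    then show ?thesis by (simp add: Pfj)
  qed
  have Pint: "integral {a..v R} (\<lambda>s. P (w s) / (v (w s))\<^sup>2) = (\<Sum>j\<le>N. co j * Jj j R)"
  proof -
    have "integral {a..v R} (\<lambda>s. P (w s) / (v (w s))\<^sup>2) = integral {a..v R} (\<lambda>s. \<Sum>j\<le>N. co j * fj j (w s))"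
      by (simp add: Pfj)
    also have "\<dots> = (\<Sum>j\<le>N. integral {a..v R} (\<lambda>s. co j * fj j (w s)))"
      by (rule integral_sum) (use hj_int[of "1/2" R] R0 R1 a_def in \<open>auto intro: integrable_on_mult_right\<close>)
    also have "\<dots> = (\<Sum>j\<le>N. co j * Jj j R)"
      using J_eq[OF R0 R1] a_def by simp
    finally show ?thesis .
  qed
  have T1: "\<bar>integral {a..v R} (\<lambda>s. (U (w s) - P (w s)) / (v (w s))\<^sup>2)\<bar> \<le> 2 * C5"
  proof -
    have "norm (integral {a..v R} (\<lambda>s. (U (w s) - P (w s)) / (v (w s))\<^sup>2)) \<le> integral {a..v R} (\<lambda>s. 2 * C5 / v R)"
    proof (rule integral_norm_bound_integral)
      have "continuous_on {a..v R} (\<lambda>s. U (w s) / (v (w s))\<^sup>2 - P (w s) / (v (w s))\<^sup>2)"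
        by (intro continuous_intros cU cP)
      then show "(\<lambda>s. (U (w s) - P (w s)) / (v (w s))\<^sup>2) integrable_on {a..v R}"
        by (simp add: diff_divide_distrib integrable_continuous_real)
      show "(\<lambda>s. 2 * C5 / v R) integrable_on {a..v R}" by (rule integrable_const_ivl)
      fix s assume s: "s \<in> {a..v R}"
      have ws: "w s \<in> {1/2..R}" "v (w s) = s" using w_props[of "1/2" R s] s R0 R1 a_def by auto
      have spos: "0 < s" using s a1 by auto
      have "\<bar>U (w s) - P (w s)\<bar> \<le> 2 * C5 * (v (w s))\<^sup>2 / v R"
        unfolding U_def P_def by (rule tail_bound) (use ws R in auto)
      then have "\<bar>U (w s) - P (w s)\<bar> / (v (w s))\<^sup>2 \<le> 2 * C5 * (v (w s))\<^sup>2 / v R / (v (w s))\<^sup>2"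
        using spos ws by (intro divide_right_mono) auto
      also have "\<dots> = 2 * C5 / v R" using spos ws by (simp add: field_simps)
      finally show "norm ((U (w s) - P (w s)) / (v (w s))\<^sup>2) \<le> 2 * C5 / v R" by simp
    qed
    also have "\<dots> = 2 * C5 * ((v R - a) / v R)" using avR by simp
    also have "\<dots> \<le> 2 * C5 * 1"
    proof -
      have "0 \<le> C5" using A_pos D_ge1 by (simp add: C5_def G0_def)
      moreover have "(v R - a) / v R \<le> 1" using vRpos a1 by (simp add: divide_le_eq)
      ultimately show ?thesis by (intro mult_left_mono) auto
    qed
    finally show ?thesis by simp
  qed
  define F where "F = (\<lambda>R'. \<Sum>j\<le>N. co j * (Jj j R' - Jj j R))"
  have Flim: "(F \<longlongrightarrow> (\<Sum>j\<le>N. co j * (cj j - Jj j R))) (at_left 1)"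
    unfolding F_def by (intro tendsto_intros J_lim)
  have Fb: "\<bar>F R'\<bar> \<le> C6" if R': "R \<le> R'" "R' < 1" for R'
  proof -
    have R'0: "1/2 \<le> R'" using R0 R' by simp
    have vle: "v R \<le> v R'" using R0 R' by (intro v_le) auto
    have "F R' = (\<Sum>j\<le>N. co j * integral {v R..v R'} (\<lambda>s. fj j (w s)))"
      unfolding F_def using J_split[OF R0 R'] by simp
    also have "\<dots> = (\<Sum>j\<le>N. integral {v R..v R'} (\<lambda>s. co j * fj j (w s)))" by simp
    also have "\<dots> = integral {v R..v R'} (\<lambda>s. \<Sum>j\<le>N. co j * fj j (w s))"
    proof (rule integral_sum[symmetric])
      fix j
      have "(\<lambda>s. fj j (w s)) integrable_on {v R..v R'}" by (rule hj_int) (use R0 R' in auto)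
      then show "(\<lambda>s. co j * fj j (w s)) integrable_on {v R..v R'}"
        by (rule integrable_on_mult_right)
    qed simp
    also have "\<dots> = integral {v R..v R'} (\<lambda>s. P (w s) / (v (w s))\<^sup>2)" by (simp add: Pfj)
    finally have Fi: "F R' = integral {v R..v R'} (\<lambda>s. P (w s) / (v (w s))\<^sup>2)" .
    have "norm (integral {v R..v R'} (\<lambda>s. P (w s) / (v (w s))\<^sup>2)) \<le> integral {v R..v R'} (\<lambda>s. C6 * V N * (1 / s\<^sup>2))"
    proof (rule integral_norm_bound_integral)
      have "continuous_on {v R..v R'} (\<lambda>s. \<Sum>j\<le>N. co j * fj j (w s))"
        using hj_cont[of R R'] R0 R' by (intro continuous_intros) auto
      then show "(\<lambda>s. P (w s) / (v (w s))\<^sup>2) integrable_on {v R..v R'}"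
        by (simp add: Pfj integrable_continuous_real)
      show "(\<lambda>s. C6 * V N * (1 / s\<^sup>2)) integrable_on {v R..v R'}"
        using inv_sq_has_int[of "v R" "v R'"] vRpos vle by (intro integrable_on_mult_right) auto
      fix s assume s: "s \<in> {v R..v R'}"
      have ws: "w s \<in> {R..R'}" "v (w s) = s" using w_props[of R R' s] s R0 R' by auto
      have spos: "0 < s" using s vRpos by auto
      have "\<bar>P (w s)\<bar> \<le> C6 * V N" unfolding P_def by (rule P_bound[OF N]) (use ws R R' in auto)
      then have "\<bar>P (w s)\<bar> / s\<^sup>2 \<le> C6 * V N / s\<^sup>2" using spos by (intro divide_right_mono) auto
      then show "norm (P (w s) / (v (w s))\<^sup>2) \<le> C6 * V N * (1 / s\<^sup>2)" using ws by simp
    qed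
    also have "\<dots> = C6 * V N * (1 / v R - 1 / v R')"
      using integral_unique[OF inv_sq_has_int[of "v R" "v R'"]] vRpos vle
        integral_mult_right[of "{v R..v R'}" "C6 * V N" "\<lambda>s. 1 / s\<^sup>2"] by (simp only:)
    also have "\<dots> \<le> C6 * V N * (1 / v R)"
    proof -
      have "0 \<le> C6" using Kpos A_pos D_ge1 lam1 by (simp add: C6_def C5_def G0_def L_def)
      then show ?thesis using V_ge1[of N] vRpos vle by (intro mult_left_mono) auto
    qed
    also have "\<dots> \<le> C6 * 1"
    proof -
      have "V N \<le> v R" unfolding V_def using R R1 rho_range by (intro v_le) auto
      then have "V N * (1 / v R) \<le> 1" using vRpos by (simp add: divide_le_eq)
      moreover have "0 \<le> C6" using Kpos A_pos D_ge1 lam1 by (simp add: C6_def C5_def G0_def L_def)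
      ultimately have "C6 * (V N * (1 / v R)) \<le> C6 * 1" by (intro mult_left_mono)
      then show ?thesis by (simp only: mult.assoc)
    qed
    finally show ?thesis using Fi by simp
  qed
  have T2: "\<bar>\<Sum>j\<le>N. co j * (cj j - Jj j R)\<bar> \<le> C6"
  proof (rule tendsto_upperbound)
    show "((\<lambda>R'. \<bar>F R'\<bar>) \<longlongrightarrow> \<bar>\<Sum>j\<le>N. co j * (cj j - Jj j R)\<bar>) (at_left 1)"
      by (intro tendsto_intros Flim)
    show "eventually (\<lambda>R'. \<bar>F R'\<bar> \<le> C6) (at_left 1)"
      using eventually_at_left_real[OF R1] by (rule eventually_mono) (use Fb in auto)
  qed simp
  have "RS_integral (\<lambda>r. u (complex_of_real r * cis \<phi>) / (v r)\<^sup>2) v (1/2) R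
      - (\<Sum>j\<le>N. \<alpha> j * cj j * cos (real (n j) * \<phi>))
      = integral {a..v R} (\<lambda>s. (U (w s) - P (w s)) / (v (w s))\<^sup>2) - (\<Sum>j\<le>N. co j * (cj j - Jj j R))"
  proof -
    have "integral {a..v R} (\<lambda>s. (U (w s) - P (w s)) / (v (w s))\<^sup>2)
        = integral {a..v R} (\<lambda>s. U (w s) / (v (w s))\<^sup>2) - integral {a..v R} (\<lambda>s. P (w s) / (v (w s))\<^sup>2)"
      by (subst integral_diff[symmetric]) (auto simp: diff_divide_distrib intro!: integrable_continuous_real cU cP)
    then show ?thesis
      using I Pint unfolding U_def co_def
      by (simp add: sum_subtractf right_diff_distrib algebra_simps)
  qed
  also have "\<bar>\<dots>\<bar> \<le> 2 * C5 + C6" using T1 T2 by linarith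
  finally show ?thesis .
qed

end


lemma abel_step:
  fixes x y :: real
  assumes "0 < x" "x \<le> y"
  shows "1 - x\<^sup>2 / y\<^sup>2 \<le> 2 * (ln y - ln x)"
proof -
  have p: "0 < x\<^sup>2 / y\<^sup>2" using assms by simp
  have "ln (x\<^sup>2 / y\<^sup>2) \<le> x\<^sup>2 / y\<^sup>2 - 1" by (rule ln_le_minus_one[OF p])
  moreover have "ln (x\<^sup>2 / y\<^sup>2) = 2 * ln x - 2 * ln y"
    using assms by (simp add: ln_div ln_realpow)
  ultimately show ?thesis by simp
qed

lemma abel:
  fixes a W :: "nat \<Rightarrow> real"
  assumes a: "\<And>j. 0 \<le> a j" and W1: "\<And>j. 1 \<le> W j" and Wm: "\<And>j. W j \<le> W (Suc j)"
    and S: "\<And>M. (\<Sum>j\<le>M. a j) \<le> B * (W M)\<^sup>2"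
  shows "(\<Sum>j\<le>N. a j / (W j)\<^sup>2) \<le> (\<Sum>j\<le>N. a j) / (W N)\<^sup>2 + 2 * B * (ln (W N) - ln (W 0))"
proof (induction N)
  case 0 then show ?case by simp
next
  case (Suc N)
  define AN where "AN = (\<Sum>j\<le>N. a j)"
  have AN0: "0 \<le> AN" unfolding AN_def using a by (simp add: sum_nonneg)
  have Wp: "0 < W N" "0 < W (Suc N)" using W1[of N] W1[of "Suc N"] by auto
  have B0: "0 \<le> B"
  proof -
    have "0 \<le> B * (W 0)\<^sup>2" using S[of 0] a[of 0] by simp
    then show ?thesis using Wp W1[of 0] by (simp add: zero_le_mult_iff)
  qed
  have key: "AN * (1 / (W N)\<^sup>2 - 1 / (W (Suc N))\<^sup>2) \<le> 2 * B * (ln (W (Suc N)) - ln (W N))"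
  proof -
    have d0: "0 \<le> 1 / (W N)\<^sup>2 - 1 / (W (Suc N))\<^sup>2"
      using Wp Wm[of N] by (simp add: frac_le power_mono)
    have "AN * (1 / (W N)\<^sup>2 - 1 / (W (Suc N))\<^sup>2) \<le> B * (W N)\<^sup>2 * (1 / (W N)\<^sup>2 - 1 / (W (Suc N))\<^sup>2)"
      using S[of N] d0 unfolding AN_def by (rule mult_right_mono)
    also have "\<dots> = B * (1 - (W N)\<^sup>2 / (W (Suc N))\<^sup>2)" using Wp by (simp add: field_simps)
    also have "\<dots> \<le> B * (2 * (ln (W (Suc N)) - ln (W N)))"
      using abel_step[OF Wp(1) Wm[of N]] B0 by (intro mult_left_mono) auto
    finally show ?thesis by (simp add: algebra_simps)
  qed
  have "(\<Sum>j\<le>Suc N. a j / (W j)\<^sup>2) \<le> AN / (W N)\<^sup>2 + 2 * B * (ln (W N) - ln (W 0)) + a (Suc N) / (W (Suc N))\<^sup>2"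
    using Suc unfolding AN_def by simp
  also have "\<dots> = (AN + a (Suc N)) / (W (Suc N))\<^sup>2 + AN * (1 / (W N)\<^sup>2 - 1 / (W (Suc N))\<^sup>2)
       + 2 * B * (ln (W N) - ln (W 0))"
    by (simp add: field_simps add_divide_distrib)
  also have "\<dots> \<le> (AN + a (Suc N)) / (W (Suc N))\<^sup>2 + 2 * B * (ln (W (Suc N)) - ln (W N))
       + 2 * B * (ln (W N) - ln (W 0))"
    using key by simp
  also have "\<dots> = (\<Sum>j\<le>Suc N. a j) / (W (Suc N))\<^sup>2 + 2 * B * (ln (W (Suc N)) - ln (W 0))"
    unfolding AN_def by (simp add: algebra_simps)
  finally show ?case .
qed

context mt begin

definition BB where "BB = 8 * K\<^sup>2 * D\<^sup>2"

lemma part2: "(\<Sum>j\<le>N. (\<alpha> j * cj j)\<^sup>2) \<le> C4\<^sup>2 * BB * (1 + 2 * ln (V N))"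
proof -
  have C4p: "0 \<le> C4" by (simp add: C4_def C0_def)
  have "(\<Sum>j\<le>N. (\<alpha> j * cj j)\<^sup>2) \<le> (\<Sum>j\<le>N. C4\<^sup>2 * ((\<alpha> j)\<^sup>2 / (V j)\<^sup>2))"
  proof (rule sum_mono)
    fix j
    have "cj j \<le> C4 / V j" "0 \<le> cj j" using cj_bounds by auto
    then have "(cj j)\<^sup>2 \<le> (C4 / V j)\<^sup>2" by (intro power_mono) auto
    then have "(\<alpha> j)\<^sup>2 * (cj j)\<^sup>2 \<le> (\<alpha> j)\<^sup>2 * (C4 / V j)\<^sup>2" by (intro mult_left_mono) auto
    then show "(\<alpha> j * cj j)\<^sup>2 \<le> C4\<^sup>2 * ((\<alpha> j)\<^sup>2 / (V j)\<^sup>2)"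
      by (simp add: power_mult_distrib power_divide mult.commute)
  qed
  also have "\<dots> = C4\<^sup>2 * (\<Sum>j\<le>N. (\<alpha> j)\<^sup>2 / (V j)\<^sup>2)" by (simp add: sum_distrib_left)
  also have "\<dots> \<le> C4\<^sup>2 * ((\<Sum>j\<le>N. (\<alpha> j)\<^sup>2) / (V N)\<^sup>2 + 2 * BB * (ln (V N) - ln (V 0)))"
  proof (rule mult_left_mono)
    show "(\<Sum>j\<le>N. (\<alpha> j)\<^sup>2 / (V j)\<^sup>2) \<le> (\<Sum>j\<le>N. (\<alpha> j)\<^sup>2) / (V N)\<^sup>2 + 2 * BB * (ln (V N) - ln (V 0))"
      by (rule abel) (use V_ge1 V_mono alpha_sq in \<open>auto simp: BB_def\<close>)
  qed simp
  also have "\<dots> \<le> C4\<^sup>2 * (BB + 2 * BB * ln (V N))"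
  proof (rule mult_left_mono)
    have VN: "0 < (V N)\<^sup>2" using V_ge1[of N] by simp
    have "(\<Sum>j\<le>N. (\<alpha> j)\<^sup>2) / (V N)\<^sup>2 \<le> BB" using alpha_sq[of N] VN by (simp add: BB_def divide_le_eq)
    moreover have "0 \<le> ln (V 0)" using V_ge1[of 0] by simp
    moreover have "0 \<le> BB" by (simp add: BB_def)
    ultimately show "(\<Sum>j\<le>N. (\<alpha> j)\<^sup>2) / (V N)\<^sup>2 + 2 * BB * (ln (V N) - ln (V 0)) \<le> BB + 2 * BB * ln (V N)"
      by (smt (verit) mult_left_mono)
  qed simp
  finally show ?thesis by (simp add: algebra_simps)
qed

end


theorem mainTheorem11:
  fixes v :: "real \<Rightarrow> real" and D K lam :: real
    and u :: "complex \<Rightarrow> real" and \<alpha> :: "nat \<Rightarrow> real" and n :: "nat \<Rightarrow> nat"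
  assumes "weight v" and "doubling v D"
    and "K > 0" and "\<forall>z. norm z < 1 \<longrightarrow> \<bar>u z\<bar> \<le> K * v (norm z)"
    and "\<forall>r \<phi>. 0 \<le> r \<and> r < 1 \<longrightarrow>
           (\<lambda>j. \<alpha> j * r ^ n j * cos (real (n j) * \<phi>)) sums u (complex_of_real r * cis \<phi>)"
    and "\<forall>j. n j > 0"
    and "1 < lam" and "lam \<le> 2"
    and "\<forall>j. lam * real (n j) < real (n (Suc j)) \<and> n (Suc j) \<le> 4 * n j"
  shows "\<exists>C. (\<forall>N R \<phi>. n N \<ge> 2 \<and> 1 - 1 / real (n N) \<le> R \<and> R < 1 - 1 / real (n (Suc N))
               \<and> -pi < \<phi> \<and> \<phi> \<le> pi \<longrightarrow>
             \<bar>RS_integral (\<lambda>r. u (complex_of_real r * cis \<phi>) / (v r)\<^sup>2) v (1/2) R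
              - (\<Sum>j\<le>N. \<alpha> j * RS_integral_to_1 (\<lambda>r. r ^ n j / (v r)\<^sup>2) v (1/2)
                          * cos (real (n j) * \<phi>))\<bar> \<le> C)
         \<and> (\<exists>M. \<forall>N. n N \<ge> M \<longrightarrow>
             (\<Sum>j\<le>N. (\<alpha> j * RS_integral_to_1 (\<lambda>r. r ^ n j / (v r)\<^sup>2) v (1/2))\<^sup>2)
               \<le> C * ln (v (1 - 1 / real (n N))))"
proof -
  have ninc: "\<forall>j. n j < n (Suc j)"
  proof
    fix j
    have "lam * real (n j) < real (n (Suc j))" using assms(9) by blast
    moreover have "1 * real (n j) \<le> lam * real (n j)" using assms(7) by (intro mult_right_mono) auto
    ultimately show "n j < n (Suc j)" by simp
  qed
  interpret mt v u \<alpha> n K D lam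
    by unfold_locales (insert assms ninc, assumption)+
  have ceq: "\<And>j. RS_integral_to_1 (\<lambda>r. r ^ n j / (v r)\<^sup>2) v (1/2) = cj j"
    by (simp add: cj_def fj_def)
  have "eventually (\<lambda>r. exp 1 \<le> v r) (at_left 1)"
    using v_lim by (simp add: filterlim_at_top)
  then obtain b where b: "b < 1" "\<And>y. b < y \<Longrightarrow> y < 1 \<Longrightarrow> exp 1 \<le> v y"
    by (auto simp: eventually_at_left_field)
  define M :: nat where "M = nat (ceiling (1 / (1 - b))) + 1"
  define C where "C = max (2 * C5 + C6) (3 * C4\<^sup>2 * BB)"
  show ?thesis
  proof (intro exI[of _ C] conjI allI impI)
    fix N R \<phi>
    assume H: "2 \<le> n N \<and> 1 - 1 / real (n N) \<le> R \<and> R < 1 - 1 / real (n (Suc N)) \<and> - pi < \<phi> \<and> \<phi> \<le> pi"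
    have "\<bar>RS_integral (\<lambda>r. u (complex_of_real r * cis \<phi>) / (v r)\<^sup>2) v (1/2) R
           - (\<Sum>j\<le>N. \<alpha> j * cj j * cos (real (n j) * \<phi>))\<bar> \<le> 2 * C5 + C6"
      by (rule part1) (use H in auto)
    then show "\<bar>RS_integral (\<lambda>r. u (complex_of_real r * cis \<phi>) / (v r)\<^sup>2) v (1/2) R
              - (\<Sum>j\<le>N. \<alpha> j * RS_integral_to_1 (\<lambda>r. r ^ n j / (v r)\<^sup>2) v (1/2)
                          * cos (real (n j) * \<phi>))\<bar> \<le> C"
      unfolding ceq C_def by linarith
  next
    show "\<exists>M. \<forall>N. n N \<ge> M \<longrightarrow>
             (\<Sum>j\<le>N. (\<alpha> j * RS_integral_to_1 (\<lambda>r. r ^ n j / (v r)\<^sup>2) v (1/2))\<^sup>2)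
               \<le> C * ln (v (1 - 1 / real (n N)))"
    proof (intro exI[of _ M] allI impI)
      fix N assume NM: "M \<le> n N"
      have b1: "0 < 1 - b" using b by simp
      have "1 / (1 - b) < real (n N)"
      proof -
        have "1 / (1 - b) \<le> real (nat (ceiling (1 / (1 - b))))" by linarith
        also have "\<dots> < real M" by (simp add: M_def)
        also have "\<dots> \<le> real (n N)" using NM by simp
        finally show ?thesis .
      qed
      then have "1 / real (n N) < 1 - b" using b1 n_ge1[of N]
        by (simp add: divide_less_eq field_simps)
      then have "exp 1 \<le> V N" unfolding V_def using n_ge1[of N] by (intro b) auto
      then have "ln (exp 1) \<le> ln (V N)" by (rule ln_mono) simp
      then have lnV: "1 \<le> ln (V N)" by simp
      have "(\<Sum>j\<le>N. (\<alpha> j * cj j)\<^sup>2) \<le> C4\<^sup>2 * BB * (1 + 2 * ln (V N))" by (rule part2)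
      also have "\<dots> \<le> C4\<^sup>2 * BB * (3 * ln (V N))"
        using lnV by (intro mult_left_mono) (auto simp: BB_def)
      also have "\<dots> = (3 * C4\<^sup>2 * BB) * ln (V N)" by simp
      also have "\<dots> \<le> C * ln (V N)" using lnV by (intro mult_right_mono) (auto simp: C_def)
      finally show "(\<Sum>j\<le>N. (\<alpha> j * RS_integral_to_1 (\<lambda>r. r ^ n j / (v r)\<^sup>2) v (1/2))\<^sup>2)
               \<le> C * ln (v (1 - 1 / real (n N)))"
        unfolding ceq V_def .
    qed
  qed
qed


end
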